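(* We have \[ \mathrm{Com}^{\mathrm{TKK}}(L(2)\otimes B)\cong L(0)\oplus L(2)\otimes B\oplus (L(0)\otimes S^2(B)\oplus L(2)\otimes\Lambda^2(B)) \oplus L(0)\otimes \Lambda^3(B), \] where each product of more than three generators from $L(2)\otimes B$ vanishes, and products of two or three generators are given, respectively, by the map \[ S^2(L(2)\otimes B)\to L(0)\otimes S^2(B)\oplus L(2)\otimes \Lambda^2(B) \] sending $(u_1\otimes b_1)(u_2\otimes b_2)$ to $K(u_1,u_2)\otimes (b_1b_2)+[u_1,u_2]\otimes(b_1\wedge b_2)$ and by the map \[ S^3(L(2)\otimes B)\to L(0)\otimes \Lambda^3(B) \] sending $(u_1\otimes b_1)(u_2\otimes b_2)(u_3\otimes b_3)$ to $K([u_1,u_2],u_3)\otimes (b_1\wedge b_2\wedge b_3)$.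
   Context: We work over a field $k$ of characteristic zero. For $n\ge 0$, $L(n)$ denotes the irreducible $\mathfrak{sl}_2$-module of highest weight $n$; $L(0)$ is the trivial module and $L(2)$ is the adjoint module $\mathfrak{sl}_2$ with basis $e,f,h$. $K$ is the Killing form of $\mathfrak{sl}_2$ normalised so that its nonzero values are $K(e,f)=K(f,e)=\frac12$, $K(h,h)=1$. The category $\mathrm{TKK}$ has as objects the completely reducible $\mathfrak{sl}_2$-modules that are direct sums of copies of $L(0)$ and $L(2)$, and as morphisms $\mathfrak{sl}_2$-module maps. $B$ is a (finite-dimensional) vector space, and $\mathrm{Com}^{\mathrm{TKK}}(L(2)\otimes B)$ is the free unital commutative associative algebra in $\mathrm{TKK}$ generated by $L(2)\otimes B$, i.e. the quotient of the symmetric algebra $S(L(2)\otimes B)$ by the ideal generated by all isotypic components $L(m)$, $m\neq 0,2$ (equivalently, by the $\mathfrak{sl}_2$-submodule of $S^2(L(2)\otimes B)$ generated by $S^2(e\otimes B)$). *)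

theory Defs
  imports Main "HOL-Library.Poly_Mapping"
begin

datatype sl2b = E | F | H

text \<open>Structure constants: the bracket of basis elements X, Y, as coefficient of basis element Z.
  [e,f] = h, [h,e] = 2e, [h,f] = -2f.\<close>
fun brk :: "sl2b \<Rightarrow> sl2b \<Rightarrow> sl2b \<Rightarrow> 'k::field_char_0" where
  "brk E F Z = (if Z = H then 1 else 0)"
| "brk F E Z = (if Z = H then -1 else 0)"
| "brk H E Z = (if Z = E then 2 else 0)"
| "brk E H Z = (if Z = E then -2 else 0)"
| "brk H F Z = (if Z = F then -2 else 0)"
| "brk F H Z = (if Z = F then 2 else 0)"
| "brk _ _ _ = 0"

text \<open>Normalised Killing form: K(e,f) = K(f,e) = 1/2, K(h,h) = 1, all other basis values 0.\<close>
fun Kf :: "sl2b \<Rightarrow> sl2b \<Rightarrow> 'k::field_char_0" where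
  "Kf E F = 1/2"
| "Kf F E = 1/2"
| "Kf H H = 1"
| "Kf _ _ = 0"

definition Kbr :: "sl2b \<Rightarrow> sl2b \<Rightarrow> sl2b \<Rightarrow> 'k::field_char_0" where
  "Kbr X Y Z = (\<Sum>C\<in>UNIV. brk X Y C * Kf C Z)"

text \<open>B is the vector space with basis indexed by the finite type 'b.
  L(2) \<otimes> B has basis X \<otimes> b_i, indexed by sl2b \<times> 'b; the symmetric algebra is the
  polynomial ring in these variables, represented via Poly_Mapping.\<close>

type_synonym ('b, 'k) spoly = "((sl2b \<times> 'b) \<Rightarrow>\<^sub>0 nat) \<Rightarrow>\<^sub>0 'k"

definition Const :: "'k::field_char_0 \<Rightarrow> ('b, 'k) spoly" where
  "Const c = Poly_Mapping.single 0 c"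

definition Var :: "sl2b \<times> 'b \<Rightarrow> ('b, 'k::field_char_0) spoly" where
  "Var v = Poly_Mapping.single (Poly_Mapping.single v 1) 1"

definition Mon :: "((sl2b \<times> 'b) \<Rightarrow>\<^sub>0 nat) \<Rightarrow> ('b, 'k::field_char_0) spoly" where
  "Mon m = Poly_Mapping.single m 1"

definition adVar :: "sl2b \<Rightarrow> sl2b \<times> 'b \<Rightarrow> ('b, 'k::field_char_0) spoly" where
  "adVar X v = (\<Sum>C\<in>UNIV. Const (brk X (fst v) C) * Var (C, snd v))"

text \<open>Action of X on S(L(2) \<otimes> B): the unique derivation extending adVar.\<close>
definition act :: "sl2b \<Rightarrow> ('b, 'k::field_char_0) spoly \<Rightarrow> ('b, 'k) spoly" where
  "act X (p :: ('b, 'k) spoly) = (\<Sum>m\<in>Poly_Mapping.keys p. \<Sum>v\<in>Poly_Mapping.keys m.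
      Const (Poly_Mapping.lookup p m * (of_nat (Poly_Mapping.lookup m v) :: 'k)) * Mon (m - Poly_Mapping.single v 1) * adVar X v)"

inductive_set tkk_rel_module :: "('b, 'k::field_char_0) spoly set" where
  gen: "Var (E, i) * Var (E, j) \<in> tkk_rel_module"
| act: "p \<in> tkk_rel_module \<Longrightarrow> act X p \<in> tkk_rel_module"
| zero: "0 \<in> tkk_rel_module"
| add: "p \<in> tkk_rel_module \<Longrightarrow> q \<in> tkk_rel_module \<Longrightarrow> p + q \<in> tkk_rel_module"
| smult: "p \<in> tkk_rel_module \<Longrightarrow> Const c * p \<in> tkk_rel_module"

inductive_set ideal_gen :: "'a::comm_ring_1 set \<Rightarrow> 'a set" for G where
  gen: "g \<in> G \<Longrightarrow> g \<in> ideal_gen G"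
| zero: "0 \<in> ideal_gen G"
| add: "p \<in> ideal_gen G \<Longrightarrow> q \<in> ideal_gen G \<Longrightarrow> p + q \<in> ideal_gen G"
| mult: "p \<in> ideal_gen G \<Longrightarrow> r * p \<in> ideal_gen G"

text \<open>The ideal defining Com^TKK(L(2) \<otimes> B) = S(L(2) \<otimes> B) / tkk_ideal.\<close>
definition tkk_ideal :: "('b, 'k::field_char_0) spoly set" where
  "tkk_ideal = ideal_gen tkk_rel_module"

text \<open>Coordinates: W0 (L(0)), W1 X i (L(2)\<otimes>B), W2S i j (S^2 B as symmetric tensors),
  W2A X i j (L(2) \<otimes> \<Lambda>^2 B, antisymmetric tensors), W3 i j l (\<Lambda>^3 B, alternating tensors).\<close>
datatype 'b widx = W0 | W1 sl2b 'b | W2S 'b 'b | W2A sl2b 'b 'b | W3 'b 'b 'b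

type_synonym ('b, 'k) wvec = "'b widx \<Rightarrow> 'k"

definition Wspace :: "('b, 'k::field_char_0) wvec set" where
  "Wspace = {w. (\<forall>i j. w (W2S i j) = w (W2S j i))
              \<and> (\<forall>X i j. w (W2A X i j) = - w (W2A X j i))
              \<and> (\<forall>i j l. w (W3 i j l) = - w (W3 j i l) \<and> w (W3 i j l) = - w (W3 i l j))}"

definition dlt :: "'b \<Rightarrow> 'b \<Rightarrow> 'k::field_char_0" where
  "dlt i j = (if i = j then 1 else 0)"

text \<open>b1 b2 in S^2 B, as symmetric tensor (b1 \<otimes> b2 + b2 \<otimes> b1)/2.\<close>
definition symt :: "'b \<Rightarrow> 'b \<Rightarrow> 'b \<Rightarrow> 'b \<Rightarrow> 'k::field_char_0" where
  "symt b1 b2 i j = (dlt b1 i * dlt b2 j + dlt b2 i * dlt b1 j) / 2"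

text \<open>b1 \<wedge> b2, as antisymmetric tensor b1 \<otimes> b2 - b2 \<otimes> b1.\<close>
definition wedge2 :: "'b \<Rightarrow> 'b \<Rightarrow> 'b \<Rightarrow> 'b \<Rightarrow> 'k::field_char_0" where
  "wedge2 b1 b2 i j = dlt b1 i * dlt b2 j - dlt b2 i * dlt b1 j"

definition wedge3 :: "'b \<Rightarrow> 'b \<Rightarrow> 'b \<Rightarrow> 'b \<Rightarrow> 'b \<Rightarrow> 'b \<Rightarrow> 'k::field_char_0" where
  "wedge3 b1 b2 b3 i j l =
     dlt b1 i * dlt b2 j * dlt b3 l + dlt b2 i * dlt b3 j * dlt b1 l + dlt b3 i * dlt b1 j * dlt b2 l
   - dlt b2 i * dlt b1 j * dlt b3 l - dlt b1 i * dlt b3 j * dlt b2 l - dlt b3 i * dlt b2 j * dlt b1 l"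

definition vars_list :: "((sl2b \<times> 'b) \<Rightarrow>\<^sub>0 nat) \<Rightarrow> (sl2b \<times> 'b) list" where
  "vars_list m = (SOME xs. sum_list (map (\<lambda>v. Poly_Mapping.single v 1) xs) = m)"

fun phi_list :: "(sl2b \<times> 'b) list \<Rightarrow> ('b, 'k::field_char_0) wvec" where
  "phi_list [] = (\<lambda>w. if w = W0 then 1 else 0)"
| "phi_list [(u, b)] = (\<lambda>w. if w = W1 u b then 1 else 0)"
| "phi_list [(u1, b1), (u2, b2)] = (\<lambda>w. case w of
      W2S i j \<Rightarrow> Kf u1 u2 * symt b1 b2 i j
    | W2A C i j \<Rightarrow> brk u1 u2 C * wedge2 b1 b2 i j
    | _ \<Rightarrow> 0)"
| "phi_list [(u1, b1), (u2, b2), (u3, b3)] = (\<lambda>w. case w of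
      W3 i j l \<Rightarrow> Kbr u1 u2 u3 * wedge3 b1 b2 b3 i j l
    | _ \<Rightarrow> 0)"
| "phi_list _ = (\<lambda>w. 0)"

definition phi :: "('b, 'k::field_char_0) spoly \<Rightarrow> ('b, 'k) wvec" where
  "phi p = (\<lambda>w. \<Sum>m\<in>Poly_Mapping.keys p. Poly_Mapping.lookup p m * phi_list (vars_list m) w)"

end

theory Submission
  imports Defs "HOL-Library.Multiset"
begin

lemma UNIV_sl2b: "(UNIV::sl2b set) = {E,F,H}" using sl2b.exhaust by auto
lemma finite_sl2b[simp]: "finite (UNIV::sl2b set)" by (simp add: UNIV_sl2b)
lemma sum_sl2b: "(\<Sum>C\<in>UNIV. g C) = g E + g F + g H"
  by (simp add: UNIV_sl2b add.assoc)

lemma Kbr_simps[simp]: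
  "Kbr E F H = (1::'k::field_char_0)" "Kbr F E H = (-1::'k)" "Kbr H E F = (1::'k)"
  "Kbr E H F = (-1::'k)" "Kbr F H E = (1::'k)" "Kbr H F E = (-1::'k)"
  "Kbr E E Z = (0::'k)" "Kbr F F Z = (0::'k)" "Kbr H H Z = (0::'k)"
  by (simp_all add: Kbr_def sum_sl2b)


lemma Kbr_anti1: "Kbr Y X Z = - (Kbr X Y Z :: 'k::field_char_0)"
  by (cases X; cases Y; cases Z; simp add: Kbr_def sum_sl2b)
lemma Kbr_anti2: "Kbr X Z Y = - (Kbr X Y Z :: 'k::field_char_0)"
  by (cases X; cases Y; cases Z; simp add: Kbr_def sum_sl2b)
lemma Kf_sym: "Kf Y X = (Kf X Y :: 'k::field_char_0)"
  by (cases X; cases Y; simp)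
lemma brk_anti: "brk Y X C = - (brk X Y C :: 'k::field_char_0)"
  by (cases X; cases Y; cases C; simp)

lemma Const_0[simp]: "Const 0 = 0" by (simp add: Const_def)
lemma Const_1[simp]: "Const 1 = 1" by (simp add: Const_def)
lemma Const_numeral[simp]: "Const (numeral n) = numeral n" by (simp add: Const_def)
lemma Const_add: "Const (a + b) = Const a + Const b" by (simp add: Const_def single_add)
lemma Const_mult: "Const (a * b) = Const a * Const b" by (simp add: Const_def mult_single)
lemma Const_uminus: "Const (- a) = - Const a" by (simp add: Const_def single_uminus)
lemma Const_diff: "Const (a - b) = Const a - Const b" by (simp add: Const_def single_diff)
lemma Const_sum: "Const (sum f A) = (\<Sum>x\<in>A. Const (f x))"
  by (induct A rule: infinite_finite_induct) (simp_all add: Const_add)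
lemma Const_single: "Const c * Poly_Mapping.single m d = Poly_Mapping.single m (c * d)"
  by (simp add: Const_def mult_single)
lemma Mon_add: "Mon (a + b) = (Mon a * Mon b :: ('b,'k::field_char_0) spoly)"
  by (simp add: Mon_def mult_single)
lemma Mon_0: "Mon 0 = 1" by (simp add: Mon_def)
lemma Var_Mon: "Var v = Mon (Poly_Mapping.single v 1)" by (simp add: Var_def Mon_def)

lemma poly_expand: "(p::'a \<Rightarrow>\<^sub>0 'c::comm_monoid_add) = (\<Sum>m\<in>Poly_Mapping.keys p. Poly_Mapping.single m (Poly_Mapping.lookup p m))"
  by (rule poly_mapping_eqI) (simp add: lookup_sum lookup_single when_def in_keys_iff)

lemma spoly_induct[case_names zero single add]:
  assumes "P 0" "\<And>m c. P (Poly_Mapping.single m c)" "\<And>p q. P p \<Longrightarrow> P q \<Longrightarrow> P (p + q)"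
  shows "P (p::'a \<Rightarrow>\<^sub>0 'c::comm_monoid_add)"
proof -
  have "P (\<Sum>m\<in>S. Poly_Mapping.single m (Poly_Mapping.lookup p m))" if "finite S" for S
    using that by (induct S rule: finite_induct) (simp_all add: assms)
  then show ?thesis by (subst poly_expand) simp
qed

lemma phi_add: "phi (p + q) = (\<lambda>w. phi p w + phi q w)"
proof (rule ext)
  fix w
  show "phi (p + q) w = phi p w + phi q w"
    unfolding phi_def
    by (rule setsum_keys_plus_distrib[where f="\<lambda>k a. a * phi_list (vars_list k) w"])
       (simp_all add: distrib_right)
qed

lemma phi_zero[simp]: "phi 0 = (\<lambda>_. 0)"
  by (simp add: phi_def)

lemma phi_single: "phi (Poly_Mapping.single m c) = (\<lambda>w. c * phi_list (vars_list m) w)"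
  by (simp add: phi_def)

lemma phi_Const_mult: "phi (Const c * p) = (\<lambda>w. c * phi p w)"
proof (induct p rule: spoly_induct)
  case zero then show ?case by simp
next
  case (single m d) then show ?case by (simp add: Const_single phi_single mult.assoc)
next
  case (add p q) then show ?case by (simp add: distrib_left phi_add )
qed

lemma phi_uminus: "phi (- p) = (\<lambda>w. - phi p w)"
proof -
  have "- p = Const (-1) * p" by (simp add: Const_uminus)
  then show ?thesis by (simp add: phi_Const_mult)
qed

lemma phi_diff: "phi (p - q) = (\<lambda>w. phi p w - phi q w)"
  using phi_add[of p "-q"] by (simp add: phi_uminus )

lemma phi_sum: "phi (sum f A) = (\<lambda>w. \<Sum>x\<in>A. phi (f x) w)"
  by (induct A rule: infinite_finite_induct) (simp_all add: phi_add )

definition Dm :: "sl2b \<Rightarrow> ((sl2b \<times> 'b) \<Rightarrow>\<^sub>0 nat) \<Rightarrow> ('b, 'k::field_char_0) spoly" where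
  "Dm X m = (\<Sum>v\<in>Poly_Mapping.keys m. Const (of_nat (Poly_Mapping.lookup m v)) * Mon (m - Poly_Mapping.single v 1) * adVar X v)"

lemma act_alt: "act X p = (\<Sum>m\<in>Poly_Mapping.keys p. Const (Poly_Mapping.lookup p m) * Dm X m)"
  unfolding act_def Dm_def
  by (simp add: Const_mult sum_distrib_left mult.assoc)

lemma act_add: "act X (p + q) = act X p + act X q"
  unfolding act_alt
  by (rule setsum_keys_plus_distrib[where f="\<lambda>k a. Const a * Dm X k"])
     (simp_all add: distrib_right Const_add)

lemma act_zero[simp]: "act X 0 = 0"
  by (simp add: act_def)

lemma act_single: "act X (Poly_Mapping.single m c) = Const c * Dm X m"
  by (simp add: act_alt)

lemma act_Const_mult: "act X (Const c * p) = Const c * act X p"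
proof (induct p rule: spoly_induct)
  case zero then show ?case by simp
next
  case (single m d) then show ?case by (simp add: Const_single act_single Const_mult mult.assoc)
next
  case (add p q) then show ?case by (simp add: distrib_left act_add)
qed

lemma act_VarVar: "act X (Var a * Var b) = adVar X a * Var b + Var a * (adVar X b :: ('b,'k::field_char_0) spoly)"
proof (cases "a = b")
  case True
  have m: "Poly_Mapping.single b (1::nat) + Poly_Mapping.single b 1 = Poly_Mapping.single b 2"
    by (simp add: single_add[symmetric] numeral_2_eq_2)
  have m2: "Poly_Mapping.single b (2::nat) - Poly_Mapping.single b 1 = Poly_Mapping.single b 1"
    by (simp add: single_diff[symmetric])
  have "Var b * Var b = (Poly_Mapping.single (Poly_Mapping.single b 2) 1 :: ('b,'k) spoly)"
    by (simp add: Var_def mult_single m[simplified])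
  then show ?thesis unfolding True
    by (simp add: act_single Dm_def m2[simplified] Var_Mon[simplified, symmetric] algebra_simps)
next
  case False
  let ?m = "Poly_Mapping.single a (1::nat) + Poly_Mapping.single b 1"
  have k: "Poly_Mapping.keys ?m = {a, b}"
    using False by (auto simp: in_keys_iff lookup_add lookup_single when_def split: if_splits)
  have d1: "?m - Poly_Mapping.single a 1 = Poly_Mapping.single b 1" by simp
  have d2: "?m - Poly_Mapping.single b 1 = Poly_Mapping.single a 1" by simp
  have l1: "Poly_Mapping.lookup ?m a = 1" "Poly_Mapping.lookup ?m b = 1"
    using False by (simp_all add: lookup_add lookup_single when_def)
  have "Var a * Var b = (Poly_Mapping.single ?m 1 :: ('b,'k) spoly)"
    by (simp add: Var_def mult_single)
  then have "act X (Var a * Var b) = (Dm X ?m :: ('b,'k) spoly)"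
    by (simp add: act_single)
  also have "\<dots> = Mon (Poly_Mapping.single b 1) * adVar X a + Mon (Poly_Mapping.single a 1) * adVar X b"
    unfolding Dm_def k using False by (simp add: d1 d2 l1 del: One_nat_def)
  finally show ?thesis by (simp add: Var_Mon[symmetric] algebra_simps del: One_nat_def)
qed

lemma lookup_sum_list_single:
  "Poly_Mapping.lookup (sum_list (map (\<lambda>v. Poly_Mapping.single v (1::nat)) xs)) v = count (mset xs) v"
  by (induct xs) (simp_all add: lookup_add lookup_single when_def)

lemma vars_list_ex: "\<exists>xs. sum_list (map (\<lambda>v. Poly_Mapping.single v (1::nat)) xs) = m"
proof -
  have fin: "finite {x. Poly_Mapping.lookup m x > 0}"
    using finite_keys[of m] by (simp add: in_keys_iff[symmetric])
  obtain xs where xs: "mset xs = Abs_multiset (Poly_Mapping.lookup m)"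
    using ex_mset by blast
  have "sum_list (map (\<lambda>v. Poly_Mapping.single v (1::nat)) xs) = m"
    by (rule poly_mapping_eqI) (simp add: lookup_sum_list_single[simplified] xs count_Abs_multiset[OF fin])
  then show ?thesis by blast
qed

lemma vars_list_spec: "sum_list (map (\<lambda>v. Poly_Mapping.single v (1::nat)) (vars_list m)) = m"
  unfolding vars_list_def using vars_list_ex[of m] by (rule someI_ex)

lemma mset_vars_list:
  assumes "sum_list (map (\<lambda>v. Poly_Mapping.single v (1::nat)) xs) = m"
  shows "mset (vars_list m) = mset xs"
proof (rule multiset_eqI)
  fix v
  show "count (mset (vars_list m)) v = count (mset xs) v"
    using arg_cong[OF vars_list_spec[of m], of "\<lambda>p. Poly_Mapping.lookup p v"]
          arg_cong[OF assms, of "\<lambda>p. Poly_Mapping.lookup p v"]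
    by (simp add: lookup_sum_list_single[simplified])
qed

lemma Mon_sum_list: "Mon (sum_list (map (\<lambda>v. Poly_Mapping.single v (1::nat)) xs)) = (prod_list (map Var xs) :: ('b,'k::field_char_0) spoly)"
  by (induct xs) (simp_all add: Mon_0 Mon_add Var_Mon)

lemma phi_Mon: "phi (Mon m) = phi_list (vars_list m)"
  by (simp add: Mon_def phi_single)

lemma phi_list_swap2: "phi_list [a, b] = (phi_list [b, a] :: ('b,'k::field_char_0) wvec)"
proof -
  obtain u1 b1 u2 b2 where "a = (u1, b1)" "b = (u2, b2)" by fastforce
  then show ?thesis
    by (auto simp: fun_eq_iff Kf_sym[of u1 u2] brk_anti[of u1 u2] symt_def wedge2_def algebra_simps split: widx.split)
qed

lemma phi_list_swap3a: "phi_list [a, b, c] = (phi_list [b, a, c] :: ('b,'k::field_char_0) wvec)"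
proof -
  obtain u1 b1 u2 b2 u3 b3 where "a = (u1, b1)" "b = (u2, b2)" "c = (u3, b3)" by (metis surj_pair)
  then show ?thesis
    by (auto simp: fun_eq_iff Kbr_anti1[of u1 u2] wedge3_def algebra_simps split: widx.split)
qed

lemma phi_list_swap3b: "phi_list [a, b, c] = (phi_list [a, c, b] :: ('b,'k::field_char_0) wvec)"
proof -
  obtain u1 b1 u2 b2 u3 b3 where "a = (u1, b1)" "b = (u2, b2)" "c = (u3, b3)" by (metis surj_pair)
  then show ?thesis
    by (auto simp: fun_eq_iff Kbr_anti2[of u1 u2] wedge3_def algebra_simps split: widx.split)
qed

lemma phi_list_long: "length xs \<ge> 4 \<Longrightarrow> phi_list xs = (\<lambda>w. 0)"
  by (cases xs rule: phi_list.cases) auto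

lemma mset2: "mset [a, b] = mset ys \<Longrightarrow> ys = [a, b] \<or> ys = [b, a]"
proof -
  assume h: "mset [a, b] = mset ys"
  then have "length ys = 2" using mset_eq_length by fastforce
  then obtain p q where "ys = [p, q]"
    by (metis One_nat_def Suc_1 length_0_conv length_Suc_conv)
  then show ?thesis using h by (auto simp: add_eq_conv_ex)
qed

lemma mset3: "mset [a, b, c] = mset ys \<Longrightarrow>
   ys = [a, b, c] \<or> ys = [a, c, b] \<or> ys = [b, a, c] \<or> ys = [b, c, a] \<or> ys = [c, a, b] \<or> ys = [c, b, a]"
proof -
  assume h: "mset [a, b, c] = mset ys"
  then have "length ys = 3" using mset_eq_length by fastforce
  then obtain p q r where "ys = [p, q, r]"
    by (metis length_0_conv length_Suc_conv numeral_3_eq_3)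
  then show ?thesis using h by (auto simp: add_eq_conv_ex)
qed

lemma phi_list_perm: "mset xs = mset ys \<Longrightarrow> phi_list xs = (phi_list ys :: ('b,'k::field_char_0) wvec)"
proof -
  assume h: "mset xs = mset ys"
  have len: "length xs = length ys" using h mset_eq_length by blast
  show ?thesis
  proof (cases xs rule: phi_list.cases)
    case 1 then show ?thesis using h by simp
  next
    case (2 u b) then show ?thesis using h by simp
  next
    case (3 u1 b1 u2 b2)
    then show ?thesis using h mset2[of "(u1,b1)" "(u2,b2)" ys] phi_list_swap2 by metis
  next
    case (4 u1 b1 u2 b2 u3 b3)
    then show ?thesis using h mset3[of "(u1,b1)" "(u2,b2)" "(u3,b3)" ys] phi_list_swap3a phi_list_swap3b
      by metis
  next
    case (5 v vb vc vd ve)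
    then have "4 \<le> length ys" using len by simp
    then show ?thesis using 5 phi_list_long[of ys] by (simp add: eq_commute)
  qed
qed

lemma phi_prod: "phi (prod_list (map Var xs) :: ('b,'k::field_char_0) spoly) = phi_list xs"
proof -
  let ?m = "sum_list (map (\<lambda>v. Poly_Mapping.single v (1::nat)) xs)"
  have "phi (prod_list (map Var xs) :: ('b,'k) spoly) = phi (Mon ?m :: ('b,'k) spoly)"
    by (simp only: Mon_sum_list)
  also have "\<dots> = phi_list (vars_list ?m)" by (rule phi_Mon)
  also have "\<dots> = phi_list xs" by (rule phi_list_perm) (rule mset_vars_list, rule refl)
  finally show ?thesis .
qed

lemma Mon_vars: "Mon m = (prod_list (map Var (vars_list m)) :: ('b,'k::field_char_0) spoly)"
  by (metis Mon_sum_list vars_list_spec)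

abbreviation ve :: "'b \<Rightarrow> ('b,'k::field_char_0) spoly" where "ve i \<equiv> Var (E, i)"
abbreviation vf :: "'b \<Rightarrow> ('b,'k::field_char_0) spoly" where "vf i \<equiv> Var (F, i)"
abbreviation vh :: "'b \<Rightarrow> ('b,'k::field_char_0) spoly" where "vh i \<equiv> Var (H, i)"

definition "M1 p q = ve p * ve q"
definition "M2 p q = vh p * ve q + ve p * vh q"
definition "M3 p q = vh p * vh q - vf p * ve q - ve p * vf q"
definition "M4 p q = vh p * vf q + vf p * vh q"
definition "M5 p q = vf p * vf q"

lemma adVar_simps[simp]:
  "adVar E (E,i) = 0" "adVar E (F,i) = vh i" "adVar E (H,i) = -2 * ve i"
  "adVar F (E,i) = - vh i" "adVar F (F,i) = 0" "adVar F (H,i) = 2 * vf i"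
  "adVar H (E,i) = 2 * ve i" "adVar H (F,i) = -2 * vf i" "adVar H (H,i) = 0"
  by (simp_all add: adVar_def sum_sl2b Const_uminus)

lemma act_uminus: "act X (- p) = - act X p"
proof -
  have "act X (- p) = act X (Const (-1) * p)" by (simp add: Const_uminus)
  also have "\<dots> = Const (-1) * act X p" by (rule act_Const_mult)
  finally show ?thesis by (simp add: Const_uminus)
qed

lemma act_diff: "act X (p - q) = act X p - act X q"
  using act_add[of X p "-q"] by (simp add: act_uminus)

lemmas act_lin = act_add act_diff act_VarVar

lemma act_M:
  "act E (M1 p q) = 0" "act E (M2 p q) = -4 * M1 p q" "act E (M3 p q) = -3 * M2 p q"
  "act E (M4 p q) = 2 * M3 p q" "act E (M5 p q) = M4 p q"
  "act F (M1 p q) = - M2 p q" "act F (M2 p q) = -2 * M3 p q" "act F (M3 p q) = 3 * M4 p q"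
  "act F (M4 p q) = 4 * M5 p q" "act F (M5 p q) = 0"
  "act H (M1 p q) = 4 * M1 p q" "act H (M2 p q) = 2 * M2 p q" "act H (M3 p q) = 0"
  "act H (M4 p q) = -2 * M4 p q" "act H (M5 p q) = -4 * M5 p q"
  by (simp_all add: M1_def M2_def M3_def M4_def M5_def act_lin algebra_simps)

inductive_set spanM :: "('b, 'k::field_char_0) spoly set" where
  m1: "M1 p q \<in> spanM" | m2: "M2 p q \<in> spanM" | m3: "M3 p q \<in> spanM"
| m4: "M4 p q \<in> spanM" | m5: "M5 p q \<in> spanM"
| zero: "0 \<in> spanM"
| add: "x \<in> spanM \<Longrightarrow> y \<in> spanM \<Longrightarrow> x + y \<in> spanM"
| smult: "x \<in> spanM \<Longrightarrow> Const c * x \<in> spanM"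

lemma spanM_num:
  fixes x :: "('b,'k::field_char_0) spoly"
  shows "x \<in> spanM \<Longrightarrow> of_int k * x \<in> spanM"
proof -
  assume "x \<in> spanM"
  then have "Const (of_int k) * x \<in> spanM" by (rule spanM.smult)
  moreover have "Const (of_int k) = (of_int k :: ('b,'k) spoly)"
    by (simp add: Const_def)
  ultimately show ?thesis by simp
qed

lemma spanM_numeral: "x \<in> spanM \<Longrightarrow> numeral n * x \<in> spanM"
  using spanM_num[of x "numeral n"] by simp
lemma spanM_neg_numeral: "x \<in> spanM \<Longrightarrow> - numeral n * x \<in> spanM"
  using spanM_num[of x "- numeral n"] by simp
lemma spanM_neg: "x \<in> spanM \<Longrightarrow> - x \<in> spanM"
  using spanM_num[of x "- 1"] by simp

lemma act_spanM: "x \<in> spanM \<Longrightarrow> act X x \<in> spanM"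
proof (induct x rule: spanM.induct)
  case (m1 p q) then show ?case
    by (cases X) (simp_all add: act_M spanM.intros spanM_numeral spanM_neg_numeral spanM_neg)
next
  case (m2 p q) then show ?case
    by (cases X) (simp_all add: act_M spanM.intros spanM_numeral spanM_neg_numeral spanM_neg)
next
  case (m3 p q) then show ?case
    by (cases X) (simp_all add: act_M spanM.intros spanM_numeral spanM_neg_numeral spanM_neg)
next
  case (m4 p q) then show ?case
    by (cases X) (simp_all add: act_M spanM.intros spanM_numeral spanM_neg_numeral spanM_neg)
next
  case (m5 p q) then show ?case
    by (cases X) (simp_all add: act_M spanM.intros spanM_numeral spanM_neg_numeral spanM_neg)
next
  case zero then show ?case by (simp add: spanM.zero)
next
  case (add x y) then show ?case by (simp add: act_add spanM.add)
next
  case (smult x c) then show ?case by (simp add: act_Const_mult spanM.smult)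
qed

lemma rel_spanM: "x \<in> tkk_rel_module \<Longrightarrow> x \<in> spanM"
proof (induct x rule: tkk_rel_module.induct)
  case (gen i j) then show ?case using spanM.m1[of i j] by (simp add: M1_def)
next
  case (act p X) then show ?case by (simp add: act_spanM)
qed (simp_all add: spanM.intros)

lemma phi_prod2: "phi (prod_list (map Var xs) * (Var a * Var b) :: ('b,'k::field_char_0) spoly) = phi_list (xs @ [a, b])"
  using phi_prod[of "xs @ [a,b]"] by (simp add: mult.assoc)

lemma phi_list_app_long: "length xs \<ge> 2 \<Longrightarrow> phi_list (xs @ [a, b]) = (\<lambda>w. 0)"
  by (rule phi_list_long) simp

lemma xs_cases: obtains "xs = []" | x where "xs = [x]" | "length xs \<ge> 2"
  by (cases xs rule: remdups_adj.cases) auto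

lemma phi_VarVar: "phi (Var a * Var b :: ('b,'k::field_char_0) spoly) = phi_list [a, b]"
  using phi_prod2[of "[]" a b] by simp

lemma phi_VarVarVar: "phi (Var x * (Var a * Var b) :: ('b,'k::field_char_0) spoly) = phi_list [x, a, b]"
  using phi_prod2[of "[x]" a b] by simp

lemma phi_M0:
  "phi (M1 p q :: ('b,'k::field_char_0) spoly) = (\<lambda>w. 0)"
  "phi (M2 p q :: ('b,'k::field_char_0) spoly) = (\<lambda>w. 0)"
  "phi (M3 p q :: ('b,'k::field_char_0) spoly) = (\<lambda>w. 0)"
  "phi (M4 p q :: ('b,'k::field_char_0) spoly) = (\<lambda>w. 0)"
  "phi (M5 p q :: ('b,'k::field_char_0) spoly) = (\<lambda>w. 0)"
  by (simp_all add: phi_VarVar M1_def M2_def M3_def M4_def M5_def phi_add phi_diff fun_eq_iff split: widx.split)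

lemma phi_M1:
  "phi (Var x * M1 p q :: ('b,'k::field_char_0) spoly) = (\<lambda>w. 0)"
  "phi (Var x * M2 p q :: ('b,'k::field_char_0) spoly) = (\<lambda>w. 0)"
  "phi (Var x * M3 p q :: ('b,'k::field_char_0) spoly) = (\<lambda>w. 0)"
  "phi (Var x * M4 p q :: ('b,'k::field_char_0) spoly) = (\<lambda>w. 0)"
  "phi (Var x * M5 p q :: ('b,'k::field_char_0) spoly) = (\<lambda>w. 0)"
  by (cases x; cases "fst x";
      simp add: phi_VarVarVar M1_def M2_def M3_def M4_def M5_def distrib_left right_diff_distrib phi_add phi_diff
        fun_eq_iff Kbr_def sum_sl2b split: widx.split)+

lemma phi_M_long:
  assumes "length xs \<ge> 2"
  shows
  "phi (prod_list (map Var xs) * M1 p q :: ('b,'k::field_char_0) spoly) = (\<lambda>w. 0)"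
  "phi (prod_list (map Var xs) * M2 p q :: ('b,'k::field_char_0) spoly) = (\<lambda>w. 0)"
  "phi (prod_list (map Var xs) * M3 p q :: ('b,'k::field_char_0) spoly) = (\<lambda>w. 0)"
  "phi (prod_list (map Var xs) * M4 p q :: ('b,'k::field_char_0) spoly) = (\<lambda>w. 0)"
  "phi (prod_list (map Var xs) * M5 p q :: ('b,'k::field_char_0) spoly) = (\<lambda>w. 0)"
  using assms
  by (simp_all add: M1_def M2_def M3_def M4_def M5_def distrib_left right_diff_distrib phi_add phi_diff
        phi_prod2 phi_list_app_long)

lemma single_as_Mon: "Poly_Mapping.single m c = Const c * Mon m"
  by (simp add: Mon_def Const_single)

lemma phi_Mon_M:
  "phi (Mon m * M1 p q :: ('b,'k::field_char_0) spoly) = (\<lambda>w. 0) \<and>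
   phi (Mon m * M2 p q :: ('b,'k::field_char_0) spoly) = (\<lambda>w. 0) \<and>
   phi (Mon m * M3 p q :: ('b,'k::field_char_0) spoly) = (\<lambda>w. 0) \<and>
   phi (Mon m * M4 p q :: ('b,'k::field_char_0) spoly) = (\<lambda>w. 0) \<and>
   phi (Mon m * M5 p q :: ('b,'k::field_char_0) spoly) = (\<lambda>w. 0)"
  unfolding Mon_vars[of m]
  by (cases "vars_list m" rule: xs_cases) (simp_all add: phi_M0 phi_M1 phi_M_long)

definition Kset :: "('b,'k::field_char_0) spoly set" where
  "Kset = {x. \<forall>r. phi (r * x) = (\<lambda>w. 0)}"

lemma Kset_M:
  fixes p q :: 'b
  shows "M1 p q \<in> (Kset :: ('b,'k::field_char_0) spoly set)" "M2 p q \<in> (Kset :: ('b,'k) spoly set)"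
   "M3 p q \<in> (Kset :: ('b,'k) spoly set)" "M4 p q \<in> (Kset :: ('b,'k) spoly set)" "M5 p q \<in> (Kset :: ('b,'k) spoly set)"
proof -
  have "phi (r * M1 p q) = (\<lambda>w. 0) \<and>
   phi (r * M2 p q) = (\<lambda>w. 0) \<and>
   phi (r * M3 p q) = (\<lambda>w. 0) \<and>
   phi (r * M4 p q) = (\<lambda>w. 0) \<and>
   phi (r * M5 p q) = (\<lambda>w. 0)" for r :: "('b,'k) spoly"
  proof (induct r rule: spoly_induct)
    case zero then show ?case by simp
  next
    case (single m c) then show ?case
      using phi_Mon_M[of m p q, where 'k='k]
      by (simp add: single_as_Mon mult.assoc phi_Const_mult)
  next
    case (add x y) then show ?case by (simp add: distrib_right phi_add)
  qed
  then show "M1 p q \<in> (Kset :: ('b,'k) spoly set)" "M2 p q \<in> (Kset :: ('b,'k) spoly set)"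
   "M3 p q \<in> (Kset :: ('b,'k) spoly set)" "M4 p q \<in> (Kset :: ('b,'k) spoly set)" "M5 p q \<in> (Kset :: ('b,'k) spoly set)"
    by (auto simp: Kset_def)
qed

lemma spanM_Kset: "x \<in> spanM \<Longrightarrow> x \<in> Kset"
proof (induct x rule: spanM.induct)
  case (add x y) then show ?case by (simp add: Kset_def distrib_left phi_add)
next
  case (smult x c) then show ?case
    by (simp add: Kset_def mult.assoc[symmetric])
next
  case zero then show ?case by (simp add: Kset_def)
qed (simp_all add: Kset_M)

lemma ideal_Kset: "x \<in> tkk_ideal \<Longrightarrow> x \<in> Kset"
  unfolding tkk_ideal_def
proof (induct x rule: ideal_gen.induct)
  case (gen g) then show ?case by (simp add: rel_spanM spanM_Kset)
next
  case zero then show ?case by (simp add: Kset_def)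
next
  case (add x y) then show ?case by (simp add: Kset_def distrib_left phi_add)
next
  case (mult x r) then show ?case by (simp add: Kset_def mult.assoc[symmetric])
qed

lemma ideal_ker: "x \<in> tkk_ideal \<Longrightarrow> phi x = (\<lambda>w. 0)"
  using ideal_Kset[of x] unfolding Kset_def by (metis (mono_tags) mem_Collect_eq mult_1)

lemma I_gen: "x \<in> tkk_rel_module \<Longrightarrow> x \<in> tkk_ideal"
  by (simp add: tkk_ideal_def ideal_gen.gen)
lemma I_add: "x \<in> tkk_ideal \<Longrightarrow> y \<in> tkk_ideal \<Longrightarrow> x + y \<in> tkk_ideal"
  by (simp add: tkk_ideal_def ideal_gen.add)
lemma I_mult: "x \<in> tkk_ideal \<Longrightarrow> r * x \<in> tkk_ideal"
  by (simp add: tkk_ideal_def ideal_gen.mult)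
lemma I_zero: "0 \<in> tkk_ideal"
  by (simp add: tkk_ideal_def ideal_gen.zero)
lemma I_diff: "x \<in> tkk_ideal \<Longrightarrow> y \<in> tkk_ideal \<Longrightarrow> x - y \<in> tkk_ideal"
  using I_add[of x "(-1) * y"] I_mult[of y "-1"] by simp

lemma Const_mult_numeral: "Const c * (numeral n * x) = Const (c * numeral n) * x"
  by (simp add: Const_mult mult.assoc)
lemma Const_mult_neg_numeral: "Const c * (- numeral n * x) = Const (- c * numeral n) * x"
  by (simp add: Const_mult Const_uminus mult.assoc)

lemma R_smult: "x \<in> tkk_rel_module \<Longrightarrow> Const c * x \<in> tkk_rel_module"
  by (rule tkk_rel_module.smult)

lemma R_M:
  fixes p q :: 'b
  shows "M1 p q \<in> (tkk_rel_module :: ('b,'k::field_char_0) spoly set)" "M2 p q \<in> (tkk_rel_module :: ('b,'k) spoly set)" "M3 p q \<in> (tkk_rel_module :: ('b,'k) spoly set)"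
  "M4 p q \<in> (tkk_rel_module :: ('b,'k) spoly set)" "M5 p q \<in> (tkk_rel_module :: ('b,'k) spoly set)"
proof -
  show r1: "M1 p q \<in> (tkk_rel_module :: ('b,'k) spoly set)" by (simp add: M1_def tkk_rel_module.gen)
  have "Const (-1 :: 'k) * act F (M1 p q) \<in> tkk_rel_module"
    by (intro R_smult tkk_rel_module.act r1)
  then show r2: "M2 p q \<in> (tkk_rel_module :: ('b,'k) spoly set)" by (simp add: act_M Const_uminus)
  have "Const (-1/2 :: 'k) * act F (M2 p q) \<in> tkk_rel_module"
    by (intro R_smult tkk_rel_module.act r2)
  moreover have "Const (-1/2 :: 'k) * act F (M2 p q) = M3 p q"
    by (simp only: act_M Const_mult_numeral Const_mult_neg_numeral) simp
  ultimately show r3: "M3 p q \<in> (tkk_rel_module :: ('b,'k) spoly set)" by simp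
  have "Const (1/3 :: 'k) * act F (M3 p q) \<in> tkk_rel_module"
    by (intro R_smult tkk_rel_module.act r3)
  moreover have "Const (1/3 :: 'k) * act F (M3 p q) = M4 p q"
    by (simp only: act_M Const_mult_numeral Const_mult_neg_numeral) simp
  ultimately show r4: "M4 p q \<in> (tkk_rel_module :: ('b,'k) spoly set)" by simp
  have "Const (1/4 :: 'k) * act F (M4 p q) \<in> tkk_rel_module"
    by (intro R_smult tkk_rel_module.act r4)
  moreover have "Const (1/4 :: 'k) * act F (M4 p q) = M5 p q"
    by (simp only: act_M Const_mult_numeral Const_mult_neg_numeral) simp
  ultimately show r5: "M5 p q \<in> (tkk_rel_module :: ('b,'k) spoly set)" by simp
qed

lemma I_M: "M1 p q \<in> tkk_ideal" "M2 p q \<in> tkk_ideal" "M3 p q \<in> tkk_ideal"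
  "M4 p q \<in> tkk_ideal" "M5 p q \<in> tkk_ideal"
  by (simp_all add: R_M I_gen)

lemma dlt_sym: "dlt a b = dlt b a" by (simp add: dlt_def)
lemma sum_dlt1: "(\<Sum>b\<in>UNIV. dlt b (j::'b::finite) * f b) = (f j :: 'k::field_char_0)"
proof -
  have "(\<Sum>b\<in>UNIV. dlt b j * f b) = (\<Sum>b\<in>UNIV. if b = j then f j else 0)"
    by (rule sum.cong) (auto simp: dlt_def)
  also have "\<dots> = f j" by simp
  finally show ?thesis .
qed
lemma sum_dlt2: "(\<Sum>b\<in>UNIV. f b * dlt b (j::'b::finite)) = (f j :: 'k::field_char_0)"
  using sum_dlt1[of j f] by (simp add: mult.commute)
lemma dd: "(\<Sum>a\<in>UNIV. \<Sum>b\<in>UNIV. g a b * (dlt a (i::'b::finite) * dlt b (j::'b))) = (g i j :: 'k::field_char_0)"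
proof -
  have "(\<Sum>a\<in>UNIV. \<Sum>b\<in>UNIV. g a b * (dlt a i * dlt b j)) = (\<Sum>a\<in>UNIV. dlt a i * (\<Sum>b\<in>UNIV. g a b * dlt b j))"
    by (simp add: sum_distrib_left mult_ac)
  also have "\<dots> = (\<Sum>a\<in>UNIV. dlt a i * g a j)" by (simp only: sum_dlt2)
  also have "\<dots> = g i j" by (simp only: sum_dlt1)
  finally show ?thesis .
qed
lemma coll_symt: "(\<Sum>a\<in>UNIV. \<Sum>b\<in>UNIV. g a b * symt a b (i::'b::finite) (j::'b)) = (g i j + g j i) / (2::'k::field_char_0)"
proof -
  have "(\<Sum>a\<in>UNIV. \<Sum>b\<in>UNIV. g a b * symt a b i j) =
     ((\<Sum>a\<in>UNIV. \<Sum>b\<in>UNIV. g a b * (dlt a i * dlt b j)) + (\<Sum>a\<in>UNIV. \<Sum>b\<in>UNIV. g a b * (dlt a j * dlt b i))) / 2"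
    by (simp add: symt_def sum.distrib sum_divide_distrib distrib_left add_divide_distrib mult_ac)
  then show ?thesis by (simp only: dd)
qed
lemma coll_wedge2: "(\<Sum>a\<in>UNIV. \<Sum>b\<in>UNIV. g a b * wedge2 a b (i::'b::finite) (j::'b)) = (g i j - g j i :: 'k::field_char_0)"
proof -
  have "(\<Sum>a\<in>UNIV. \<Sum>b\<in>UNIV. g a b * wedge2 a b i j) =
     (\<Sum>a\<in>UNIV. \<Sum>b\<in>UNIV. g a b * (dlt a i * dlt b j)) - (\<Sum>a\<in>UNIV. \<Sum>b\<in>UNIV. g a b * (dlt a j * dlt b i))"
    by (simp add: wedge2_def sum_subtractf right_diff_distrib mult_ac)
  then show ?thesis by (simp only: dd)
qed
lemma ddd: "(\<Sum>a\<in>UNIV. \<Sum>b\<in>UNIV. \<Sum>c\<in>UNIV. g a b c * (dlt a (i::'b::finite) * dlt b (j::'b) * dlt c (l::'b))) = (g i j l :: 'k::field_char_0)"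
proof -
  have "(\<Sum>a\<in>UNIV. \<Sum>b\<in>UNIV. \<Sum>c\<in>UNIV. g a b c * (dlt a i * dlt b j * dlt c l)) =
      (\<Sum>a\<in>UNIV. dlt a i * (\<Sum>b\<in>UNIV. dlt b j * (\<Sum>c\<in>UNIV. g a b c * dlt c l)))"
    by (simp add: sum_distrib_left mult_ac)
  also have "\<dots> = (\<Sum>a\<in>UNIV. dlt a i * (\<Sum>b\<in>UNIV. dlt b j * g a b l))" by (simp only: sum_dlt2)
  also have "\<dots> = (\<Sum>a\<in>UNIV. dlt a i * g a j l)" by (simp only: sum_dlt1)
  also have "\<dots> = g i j l" by (simp only: sum_dlt1)
  finally show ?thesis .
qed
lemma coll_wedge3: "(\<Sum>a\<in>UNIV. \<Sum>b\<in>UNIV. \<Sum>c\<in>UNIV. g a b c * wedge3 a b c (i::'b::finite) (j::'b) (l::'b)) =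
   (g i j l + g l i j + g j l i - g j i l - g i l j - g l j i :: 'k::field_char_0)"
proof -
  let ?S = "\<lambda>i j l. (\<Sum>a\<in>UNIV. \<Sum>b\<in>UNIV. \<Sum>c\<in>UNIV. g a b c * (dlt a i * dlt b j * dlt c l))"
  have "(\<Sum>a\<in>UNIV. \<Sum>b\<in>UNIV. \<Sum>c\<in>UNIV. g a b c * wedge3 a b c i j l) =
     ?S i j l + ?S l i j + ?S j l i - ?S j i l - ?S i l j - ?S l j i"
    by (simp add: wedge3_def sum.distrib sum_subtractf right_diff_distrib distrib_left mult_ac)
  then show ?thesis by (simp only: ddd)
qed

lemma coll_symt_c: "(\<Sum>a\<in>UNIV. \<Sum>b\<in>UNIV. g a b * (c * symt a b (i::'b::finite) (j::'b))) = c * ((g i j + g j i) / (2::'k::field_char_0))"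
proof -
  have "(\<Sum>a\<in>UNIV. \<Sum>b\<in>UNIV. g a b * (c * symt a b i j)) = c * (\<Sum>a\<in>UNIV. \<Sum>b\<in>UNIV. g a b * symt a b i j)"
    by (simp add: sum_distrib_left mult_ac)
  then show ?thesis by (simp only: coll_symt)
qed
lemma coll_wedge2_c: "(\<Sum>a\<in>UNIV. \<Sum>b\<in>UNIV. g a b * (c * wedge2 a b (i::'b::finite) (j::'b))) = c * (g i j - g j i :: 'k::field_char_0)"
proof -
  have "(\<Sum>a\<in>UNIV. \<Sum>b\<in>UNIV. g a b * (c * wedge2 a b i j)) = c * (\<Sum>a\<in>UNIV. \<Sum>b\<in>UNIV. g a b * wedge2 a b i j)"
    by (simp add: sum_distrib_left mult_ac)
  then show ?thesis by (simp only: coll_wedge2)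
qed
lemma coll_wedge3_c: "(\<Sum>a\<in>UNIV. \<Sum>b\<in>UNIV. \<Sum>d\<in>UNIV. g a b d * (c * wedge3 a b d (i::'b::finite) (j::'b) (l::'b))) =
   c * (g i j l + g l i j + g j l i - g j i l - g i l j - g l j i :: 'k::field_char_0)"
proof -
  have "(\<Sum>a\<in>UNIV. \<Sum>b\<in>UNIV. \<Sum>d\<in>UNIV. g a b d * (c * wedge3 a b d i j l)) = c * (\<Sum>a\<in>UNIV. \<Sum>b\<in>UNIV. \<Sum>d\<in>UNIV. g a b d * wedge3 a b d i j l)"
    by (simp add: sum_distrib_left mult_ac)
  then show ?thesis by (simp only: coll_wedge3)
qed

lemma ConstM_dlt1: "(\<Sum>b\<in>UNIV. Const (dlt (j::'b::finite) b * c) * G b) = (Const c * G j :: ('b2,'k::field_char_0) spoly)"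
proof -
  have "(\<Sum>b\<in>UNIV. Const (dlt j b * c) * G b) = (\<Sum>b\<in>UNIV. if b = j then Const c * G j else (0 :: ('b2,'k) spoly))"
    by (rule sum.cong) (auto simp: dlt_def)
  also have "\<dots> = Const c * G j" by simp
  finally show ?thesis .
qed

lemma ddC: "(\<Sum>a\<in>UNIV. \<Sum>b\<in>UNIV. Const (c * (dlt (i::'b::finite) a * dlt (j::'b) b)) * G a b) = (Const c * G i j :: ('b2,'k::field_char_0) spoly)"
proof -
  have "(\<Sum>a\<in>UNIV. \<Sum>b\<in>UNIV. Const (c * (dlt i a * dlt j b)) * G a b) =
        (\<Sum>a\<in>UNIV. \<Sum>b\<in>UNIV. Const (dlt j b * (dlt i a * c)) * G a b)"
    by (simp add: mult_ac)
  also have "\<dots> = (\<Sum>a\<in>UNIV. Const (dlt i a * c) * G a j)" by (simp only: ConstM_dlt1)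
  also have "\<dots> = Const c * G i j" by (simp only: ConstM_dlt1)
  finally show ?thesis .
qed

lemma dddC: "(\<Sum>a\<in>UNIV. \<Sum>b\<in>UNIV. \<Sum>d\<in>UNIV. Const (c * (dlt (i::'b::finite) a * dlt (j::'b) b * dlt (l::'b) d)) * G a b d) = (Const c * G i j l :: ('b2,'k::field_char_0) spoly)"
proof -
  have "(\<Sum>a\<in>UNIV. \<Sum>b\<in>UNIV. \<Sum>d\<in>UNIV. Const (c * (dlt i a * dlt j b * dlt l d)) * G a b d) =
        (\<Sum>a\<in>UNIV. \<Sum>b\<in>UNIV. \<Sum>d\<in>UNIV. Const (dlt l d * (dlt j b * (dlt i a * c))) * G a b d)"
    by (simp add: mult_ac)
  also have "\<dots> = (\<Sum>a\<in>UNIV. \<Sum>b\<in>UNIV. Const (dlt j b * (dlt i a * c)) * G a b l)" by (simp only: ConstM_dlt1)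
  also have "\<dots> = (\<Sum>a\<in>UNIV. Const (dlt i a * c) * G a j l)" by (simp only: ConstM_dlt1)
  also have "\<dots> = Const c * G i j l" by (simp only: ConstM_dlt1)
  finally show ?thesis .
qed

lemma collC_symt: "(\<Sum>a\<in>UNIV. \<Sum>b\<in>UNIV. Const (c * symt (i::'b::finite) (j::'b) a b) * G a b) =
   (Const (c/2) * (G i j + G j i) :: ('b2,'k::field_char_0) spoly)"
proof -
  have "(\<Sum>a\<in>UNIV. \<Sum>b\<in>UNIV. Const (c * symt i j a b) * G a b) =
    (\<Sum>a\<in>UNIV. \<Sum>b\<in>UNIV. Const (c/2 * (dlt i a * dlt j b)) * G a b) + (\<Sum>a\<in>UNIV. \<Sum>b\<in>UNIV. Const (c/2 * (dlt j a * dlt i b)) * G a b)"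
  proof -
    have "Const (c * symt i j a b) * G a b = Const (c/2 * (dlt i a * dlt j b)) * G a b + Const (c/2 * (dlt j a * dlt i b)) * G a b" for a b
    proof -
      have "c * symt i j a b = c/2 * (dlt i a * dlt j b) + c/2 * (dlt j a * dlt i b)"
        by (simp add: symt_def field_simps)
      then show ?thesis by (simp add: Const_add distrib_right)
    qed
    then show ?thesis by (simp add: sum.distrib)
  qed
  then show ?thesis by (simp only: ddC distrib_left)
qed

lemma collC_wedge2: "(\<Sum>a\<in>UNIV. \<Sum>b\<in>UNIV. Const (c * wedge2 (i::'b::finite) (j::'b) a b) * G a b) =
   (Const c * (G i j - G j i) :: ('b2,'k::field_char_0) spoly)"
proof -
  have "(\<Sum>a\<in>UNIV. \<Sum>b\<in>UNIV. Const (c * wedge2 i j a b) * G a b) =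
    (\<Sum>a\<in>UNIV. \<Sum>b\<in>UNIV. Const (c * (dlt i a * dlt j b)) * G a b) - (\<Sum>a\<in>UNIV. \<Sum>b\<in>UNIV. Const (c * (dlt j a * dlt i b)) * G a b)"
  proof -
    have "Const (c * wedge2 i j a b) * G a b = Const (c * (dlt i a * dlt j b)) * G a b - Const (c * (dlt j a * dlt i b)) * G a b" for a b
    proof -
      have "c * wedge2 i j a b = c * (dlt i a * dlt j b) - c * (dlt j a * dlt i b)"
        by (simp add: wedge2_def field_simps)
      then show ?thesis by (simp add: Const_diff left_diff_distrib)
    qed
    then show ?thesis by (simp add: sum_subtractf)
  qed
  then show ?thesis by (simp only: ddC right_diff_distrib)
qed

lemma collC_wedge3: "(\<Sum>a\<in>UNIV. \<Sum>b\<in>UNIV. \<Sum>d\<in>UNIV. Const (c * wedge3 (i::'b::finite) (j::'b) (l::'b) a b d) * G a b d) =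
   (Const c * (G i j l + G j l i + G l i j - G j i l - G i l j - G l j i) :: ('b2,'k::field_char_0) spoly)"
proof -
  let ?S = "\<lambda>i j l. (\<Sum>a\<in>UNIV. \<Sum>b\<in>UNIV. \<Sum>d\<in>UNIV. Const (c * (dlt i a * dlt j b * dlt l d)) * G a b d)"
  have "(\<Sum>a\<in>UNIV. \<Sum>b\<in>UNIV. \<Sum>d\<in>UNIV. Const (c * wedge3 i j l a b d) * G a b d) =
     ?S i j l + ?S j l i + ?S l i j - ?S j i l - ?S i l j - ?S l j i"
  proof -
    have "Const (c * wedge3 i j l a b d) * G a b d =
       Const (c * (dlt i a * dlt j b * dlt l d)) * G a b d + Const (c * (dlt j a * dlt l b * dlt i d)) * G a b d
     + Const (c * (dlt l a * dlt i b * dlt j d)) * G a b d - Const (c * (dlt j a * dlt i b * dlt l d)) * G a b d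
     - Const (c * (dlt i a * dlt l b * dlt j d)) * G a b d - Const (c * (dlt l a * dlt j b * dlt i d)) * G a b d" for a b d
    proof -
      have "c * wedge3 i j l a b d = c * (dlt i a * dlt j b * dlt l d) + c * (dlt j a * dlt l b * dlt i d)
     + c * (dlt l a * dlt i b * dlt j d) - c * (dlt j a * dlt i b * dlt l d)
     - c * (dlt i a * dlt l b * dlt j d) - c * (dlt l a * dlt j b * dlt i d)"
        by (simp add: wedge3_def field_simps dlt_sym)
      then show ?thesis by (simp only: Const_diff Const_add left_diff_distrib distrib_right)
    qed
    then show ?thesis by (simp add: sum.distrib sum_subtractf)
  qed
  then show ?thesis by (simp only: dddC distrib_left right_diff_distrib)
qed

lemma wedge3_a1: "wedge3 b1 b2 b3 j i l = - (wedge3 b1 b2 b3 i j l :: 'k::field_char_0)"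
  unfolding wedge3_def by (simp add: algebra_simps)
lemma wedge3_a2: "wedge3 b1 b2 b3 i l j = - (wedge3 b1 b2 b3 i j l :: 'k::field_char_0)"
  unfolding wedge3_def by (simp add: algebra_simps)
lemma wedge3_m1: "c * wedge3 b1 b2 b3 i j l = - (c * wedge3 b1 b2 b3 j i l :: 'k::field_char_0)"
  by (simp add: wedge3_a1[of b1 b2 b3 i j l])
lemma wedge3_m2: "c * wedge3 b1 b2 b3 i j l = - (c * wedge3 b1 b2 b3 i l j :: 'k::field_char_0)"
  by (simp add: wedge3_a2[of b1 b2 b3 i j l])

lemma phi_list_Wspace: "phi_list xs \<in> (Wspace :: ('b,'k::field_char_0) wvec set)"
proof (cases xs rule: phi_list.cases)
  case (3 u1 b1 u2 b2) then show ?thesis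
    by (auto simp: Wspace_def symt_def wedge2_def algebra_simps)
next
  case (4 u1 b1 u2 b2 u3 b3) then show ?thesis
    unfolding Wspace_def by (auto split: widx.split intro: wedge3_m1 wedge3_m2)
qed (auto simp: Wspace_def)

lemma Wspace_add: "v \<in> Wspace \<Longrightarrow> w \<in> Wspace \<Longrightarrow> (\<lambda>x. v x + w x) \<in> Wspace"
  unfolding Wspace_def mem_Collect_eq
  by (intro conjI allI; (elim conjE)?; metis minus_add_distrib)

lemma Wspace_scale: "v \<in> Wspace \<Longrightarrow> (\<lambda>x. c * v x) \<in> Wspace"
  unfolding Wspace_def mem_Collect_eq
  by (intro conjI allI; (elim conjE)?; metis mult_minus_right)

lemma Wspace_zero: "(\<lambda>x. 0) \<in> Wspace"
  by (auto simp: Wspace_def)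

lemma phi_Wspace: "phi p \<in> Wspace"
proof (induct p rule: spoly_induct)
  case zero then show ?case by (simp add: Wspace_zero)
next
  case (single m c) then show ?case by (simp add: phi_single Wspace_scale phi_list_Wspace)
next
  case (add p q) then show ?case by (simp add: phi_add Wspace_add)
qed

definition sec :: "('b::finite, 'k::field_char_0) wvec \<Rightarrow> ('b, 'k) spoly" where
"sec w = Const (w W0)
 + (\<Sum>X\<in>UNIV. \<Sum>i\<in>UNIV. Const (w (W1 X i)) * Var (X, i))
 + (\<Sum>a\<in>UNIV. \<Sum>b\<in>UNIV. Const (w (W2S a b)) * (vh a * vh b))
 + Const (1/2) * (\<Sum>a\<in>UNIV. \<Sum>b\<in>UNIV. Const (w (W2A H a b)) * (ve a * vf b))
 + Const (1/4) * (\<Sum>a\<in>UNIV. \<Sum>b\<in>UNIV. Const (w (W2A E a b)) * (vh a * ve b))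
 - Const (1/4) * (\<Sum>a\<in>UNIV. \<Sum>b\<in>UNIV. Const (w (W2A F a b)) * (vh a * vf b))
 + Const (1/6) * (\<Sum>a\<in>UNIV. \<Sum>b\<in>UNIV. \<Sum>c\<in>UNIV. Const (w (W3 a b c)) * (ve a * vf b * vh c))"

lemma sec_zero: "sec (\<lambda>x. 0) = 0"
  unfolding sec_def by simp

lemma sec_add: "sec (\<lambda>x. v x + w x) = sec v + sec w"
  unfolding sec_def by (simp add: Const_add distrib_right sum.distrib algebra_simps)

lemma sec_scale: "sec (\<lambda>x. c * v x) = Const c * sec v"
  unfolding sec_def by (simp add: Const_mult sum_distrib_left algebra_simps)

lemma phi_one: "phi (1 :: ('b,'k::field_char_0) spoly) = phi_list []"
  using phi_prod[of "[]"] by simp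
lemma phi_Const: "phi (Const c :: ('b,'k::field_char_0) spoly) = (\<lambda>x. c * phi_list [] x)"
  using phi_Const_mult[of c 1] by (simp add: phi_one)
lemma phi_Var: "phi (Var v :: ('b,'k::field_char_0) spoly) = phi_list [v]"
  using phi_prod[of "[v]"] by simp
lemma phi_VVV: "phi (Var a * Var b * Var c :: ('b,'k::field_char_0) spoly) = phi_list [a, b, c]"
  using phi_prod[of "[a,b,c]"] by (simp add: mult.assoc)

lemma phi_sec: "phi (sec w) x =
   w W0 * phi_list [] x
 + (\<Sum>X\<in>UNIV. \<Sum>i\<in>UNIV. w (W1 X i) * phi_list [(X, i)] x)
 + (\<Sum>a\<in>UNIV. \<Sum>b\<in>UNIV. w (W2S a b) * phi_list [(H, a), (H, b)] x)
 + 1/2 * (\<Sum>a\<in>UNIV. \<Sum>b\<in>UNIV. w (W2A H a b) * phi_list [(E, a), (F, b)] x)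
 + 1/4 * (\<Sum>a\<in>UNIV. \<Sum>b\<in>UNIV. w (W2A E a b) * phi_list [(H, a), (E, b)] x)
 - 1/4 * (\<Sum>a\<in>UNIV. \<Sum>b\<in>UNIV. w (W2A F a b) * phi_list [(H, a), (F, b)] x)
 + 1/6 * (\<Sum>a\<in>UNIV. \<Sum>b\<in>UNIV. \<Sum>c\<in>UNIV. w (W3 a b c) * phi_list [(E, a), (F, b), (H, c)] x)"
  unfolding sec_def
  by (simp only: phi_add phi_diff phi_Const_mult phi_sum phi_Const phi_Var phi_VarVar phi_VVV)

lemma sum_if_delta: "(\<Sum>i\<in>UNIV. f i * (if P \<and> (j::'b::finite) = i then 1 else 0)) = (if P then f j else (0::'k::field_char_0))"
proof -
  have "(\<Sum>i\<in>UNIV. f i * (if P \<and> j = i then 1 else 0)) = (\<Sum>i\<in>UNIV. if j = i then (if P then f j else 0) else 0)"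
    by (rule sum.cong) auto
  then show ?thesis by simp
qed
lemma sum_if_delta2: "(\<Sum>X\<in>UNIV. (if (Y::sl2b) = X then f X else (0::'k::field_char_0))) = f Y"
  by simp
lemmas SO = phi_sec phi_list.simps widx.case Kf.simps brk.simps Kbr_simps mult_1_left mult_1_right
   mult_zero_left mult_zero_right sum.neutral_const if_False if_True sl2b.distinct simp_thms widx.distinct
   add_0_right add_0_left diff_0_right

lemma sA: "w \<in> Wspace \<Longrightarrow> w (W2A C j i) = - w (W2A C i j)" unfolding Wspace_def by blast
lemma sS: "w \<in> Wspace \<Longrightarrow> w (W2S j i) = w (W2S i j)" unfolding Wspace_def by blast
lemma s3a: "w \<in> Wspace \<Longrightarrow> w (W3 j i l) = - w (W3 i j l)" unfolding Wspace_def mem_Collect_eq by (elim conjE) (metis minus_minus)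
lemma s3b: "w \<in> Wspace \<Longrightarrow> w (W3 i l j) = - w (W3 i j l)" unfolding Wspace_def mem_Collect_eq by (elim conjE) (metis minus_minus)

lemma phi_sec_id:
  assumes "w \<in> Wspace"
  shows "phi (sec w) = w"
proof (rule ext)
  fix x
  show "phi (sec w) x = w x"
  proof (cases x)
    case W0 then show ?thesis by (simp add: phi_sec)
  next
    case (W1 Y j) then show ?thesis by (simp add: phi_sec sum_if_delta)
  next
    case (W2S a b) then show ?thesis
      apply (simp only: SO coll_symt coll_symt_c)
      using assms sS[of w b a] sA[of w H b a] by simp
  next
    case (W2A C a b) then show ?thesis
      apply (cases C; simp only: SO coll_wedge2 coll_wedge2_c)
      using assms sA[of w _ b a] by simp_all
  next
    case (W3 a b c) then show ?thesis
      apply (simp only: SO coll_wedge3 coll_wedge3_c)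
      using assms s3a[of w c a b] s3b[of w a c b] s3a[of w b c a] s3b[of w c b a] s3a[of w b a c] by simp
  qed
qed

lemma range_phi: "range (phi :: ('b::finite,'k::field_char_0) spoly \<Rightarrow> _) = Wspace"
proof
  show "range (phi :: ('b,'k) spoly \<Rightarrow> _) \<subseteq> Wspace" using phi_Wspace by blast
  show "Wspace \<subseteq> range (phi :: ('b,'k) spoly \<Rightarrow> _)"
  proof
    fix w :: "('b,'k) wvec" assume "w \<in> Wspace"
    then have "phi (sec w) = w" by (rule phi_sec_id)
    then show "w \<in> range phi" by (metis rangeI)
  qed
qed

lemma sumC_if_delta: "(\<Sum>i\<in>UNIV. Const (if P \<and> (i::'b::finite) = j then 1 else 0) * G i) = (if P then G j else (0::('b2,'k::field_char_0) spoly))"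
proof -
  have "(\<Sum>i\<in>UNIV. Const (if P \<and> i = j then 1 else 0) * G i) = (\<Sum>i\<in>UNIV. if j = i then (if P then G j else 0) else 0)"
    by (rule sum.cong) auto
  then show ?thesis by simp
qed

lemmas SC = sec_def phi_list.simps widx.case widx.inject Const_0 mult_zero_left mult_zero_right sum.neutral_const
   add_0_right add_0_left diff_0_right if_False if_True simp_thms widx.distinct

lemma sec_phi0: "sec (phi_list [] :: ('b::finite,'k::field_char_0) wvec) = 1"
  by (simp add: sec_def)

lemma sec_phi1: "sec (phi_list [(X, i)] :: ('b::finite,'k::field_char_0) wvec) = Var (X, i)"
  by (simp add: sec_def sumC_if_delta)

definition "A3 i j l = ve i * vf j * vh l + ve j * vf l * vh i + ve l * vf i * vh j
   - ve j * vf i * vh l - ve i * vf l * vh j - ve l * vf j * vh i"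

lemma sec_phi2: "sec (phi_list [(X, i), (Y, j)] :: ('b::finite,'k::field_char_0) wvec) =
   Const (Kf X Y / 2) * (vh i * vh j + vh j * vh i)
 + Const (1/2) * (Const (brk X Y H) * (ve i * vf j - ve j * vf i))
 + Const (1/4) * (Const (brk X Y E) * (vh i * ve j - vh j * ve i))
 - Const (1/4) * (Const (brk X Y F) * (vh i * vf j - vh j * vf i))"
  by (simp only: SC collC_symt collC_wedge2)

lemma sec_phi3: "sec (phi_list [(X, i), (Y, j), (Z, l)] :: ('b::finite,'k::field_char_0) wvec) =
   Const (1/6) * (Const (Kbr X Y Z) * A3 i j l)"
  unfolding A3_def
  by (simp only: SC collC_wedge3 mult.assoc)

lemma cert3_EEE: "6 * (Var (E, i) * Var (E, j) * Var (E, l)) - Const (Kbr E E E) * A3 i j l \<in> (tkk_ideal :: ('b,'k::field_char_0) spoly set)"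
proof -
  have eq: "(6 * (Var (E, i) * Var (E, j) * Var (E, l)) - Const (Kbr E E E) * A3 i j l :: ('b,'k) spoly) = (6 * ve l) * M1 i j"
    by (simp add: A3_def M1_def M2_def M3_def M4_def M5_def Const_uminus Kbr_def sum_sl2b algebra_simps)
  show ?thesis unfolding eq by (intro I_add I_mult I_M)
qed

lemma cert3_EEF: "6 * (Var (E, i) * Var (E, j) * Var (F, l)) - Const (Kbr E E F) * A3 i j l \<in> (tkk_ideal :: ('b,'k::field_char_0) spoly set)"
proof -
  have eq: "(6 * (Var (E, i) * Var (E, j) * Var (F, l)) - Const (Kbr E E F) * A3 i j l :: ('b,'k) spoly) = (6 * vf l) * M1 i j"
    by (simp add: A3_def M1_def M2_def M3_def M4_def M5_def Const_uminus Kbr_def sum_sl2b algebra_simps)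
  show ?thesis unfolding eq by (intro I_add I_mult I_M)
qed

lemma cert3_EEH: "6 * (Var (E, i) * Var (E, j) * Var (H, l)) - Const (Kbr E E H) * A3 i j l \<in> (tkk_ideal :: ('b,'k::field_char_0) spoly set)"
proof -
  have eq: "(6 * (Var (E, i) * Var (E, j) * Var (H, l)) - Const (Kbr E E H) * A3 i j l :: ('b,'k) spoly) = (6 * vh l) * M1 i j"
    by (simp add: A3_def M1_def M2_def M3_def M4_def M5_def Const_uminus Kbr_def sum_sl2b algebra_simps)
  show ?thesis unfolding eq by (intro I_add I_mult I_M)
qed

lemma cert3_EFE: "6 * (Var (E, i) * Var (F, j) * Var (E, l)) - Const (Kbr E F E) * A3 i j l \<in> (tkk_ideal :: ('b,'k::field_char_0) spoly set)"
proof -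
  have eq: "(6 * (Var (E, i) * Var (F, j) * Var (E, l)) - Const (Kbr E F E) * A3 i j l :: ('b,'k) spoly) = (6 * vf j) * M1 i l"
    by (simp add: A3_def M1_def M2_def M3_def M4_def M5_def Const_uminus Kbr_def sum_sl2b algebra_simps)
  show ?thesis unfolding eq by (intro I_add I_mult I_M)
qed

lemma cert3_EFF: "6 * (Var (E, i) * Var (F, j) * Var (F, l)) - Const (Kbr E F F) * A3 i j l \<in> (tkk_ideal :: ('b,'k::field_char_0) spoly set)"
proof -
  have eq: "(6 * (Var (E, i) * Var (F, j) * Var (F, l)) - Const (Kbr E F F) * A3 i j l :: ('b,'k) spoly) = (6 * ve i) * M5 j l"
    by (simp add: A3_def M1_def M2_def M3_def M4_def M5_def Const_uminus Kbr_def sum_sl2b algebra_simps)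
  show ?thesis unfolding eq by (intro I_add I_mult I_M)
qed

lemma cert3_EFH: "6 * (Var (E, i) * Var (F, j) * Var (H, l)) - Const (Kbr E F H) * A3 i j l \<in> (tkk_ideal :: ('b,'k::field_char_0) spoly set)"
proof -
  have eq: "(6 * (Var (E, i) * Var (F, j) * Var (H, l)) - Const (Kbr E F H) * A3 i j l :: ('b,'k) spoly) = ((-1) * ve l) * M4 i j + ((-2) * vf l) * M2 i j + (1 * ve j) * M4 i l + (2 * vf j) * M2 i l + (3 * ve i) * M4 j l"
    by (simp add: A3_def M1_def M2_def M3_def M4_def M5_def Const_uminus Kbr_def sum_sl2b algebra_simps)
  show ?thesis unfolding eq by (intro I_add I_mult I_M)
qed

lemma cert3_EHE: "6 * (Var (E, i) * Var (H, j) * Var (E, l)) - Const (Kbr E H E) * A3 i j l \<in> (tkk_ideal :: ('b,'k::field_char_0) spoly set)"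
proof -
  have eq: "(6 * (Var (E, i) * Var (H, j) * Var (E, l)) - Const (Kbr E H E) * A3 i j l :: ('b,'k) spoly) = (6 * ve l) * M2 i j + (6 * vh l) * M1 i j + ((-6) * ve j) * M2 i l"
    by (simp add: A3_def M1_def M2_def M3_def M4_def M5_def Const_uminus Kbr_def sum_sl2b algebra_simps)
  show ?thesis unfolding eq by (intro I_add I_mult I_M)
qed

lemma cert3_EHF: "6 * (Var (E, i) * Var (H, j) * Var (F, l)) - Const (Kbr E H F) * A3 i j l \<in> (tkk_ideal :: ('b,'k::field_char_0) spoly set)"
proof -
  have eq: "(6 * (Var (E, i) * Var (H, j) * Var (F, l)) - Const (Kbr E H F) * A3 i j l :: ('b,'k) spoly) = (1 * ve l) * M4 i j + (2 * vf l) * M2 i j + ((-1) * ve j) * M4 i l + ((-2) * vf j) * M2 i l + (3 * ve i) * M4 j l"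
    by (simp add: A3_def M1_def M2_def M3_def M4_def M5_def Const_uminus Kbr_def sum_sl2b algebra_simps)
  show ?thesis unfolding eq by (intro I_add I_mult I_M)
qed

lemma cert3_EHH: "6 * (Var (E, i) * Var (H, j) * Var (H, l)) - Const (Kbr E H H) * A3 i j l \<in> (tkk_ideal :: ('b,'k::field_char_0) spoly set)"
proof -
  have eq: "(6 * (Var (E, i) * Var (H, j) * Var (H, l)) - Const (Kbr E H H) * A3 i j l :: ('b,'k) spoly) = (6 * vf l) * M1 i j + (6 * vf j) * M1 i l + (6 * ve i) * M3 j l"
    by (simp add: A3_def M1_def M2_def M3_def M4_def M5_def Const_uminus Kbr_def sum_sl2b algebra_simps)
  show ?thesis unfolding eq by (intro I_add I_mult I_M)
qed

lemma cert3_FEE: "6 * (Var (F, i) * Var (E, j) * Var (E, l)) - Const (Kbr F E E) * A3 i j l \<in> (tkk_ideal :: ('b,'k::field_char_0) spoly set)"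
proof -
  have eq: "(6 * (Var (F, i) * Var (E, j) * Var (E, l)) - Const (Kbr F E E) * A3 i j l :: ('b,'k) spoly) = ((-12) * vf l) * M1 i j + (6 * vh l) * M2 i j + ((-6) * ve j) * M3 i l + ((-6) * vf j) * M1 i l + ((-6) * ve i) * M3 j l"
    by (simp add: A3_def M1_def M2_def M3_def M4_def M5_def Const_uminus Kbr_def sum_sl2b algebra_simps)
  show ?thesis unfolding eq by (intro I_add I_mult I_M)
qed

lemma cert3_FEF: "6 * (Var (F, i) * Var (E, j) * Var (F, l)) - Const (Kbr F E F) * A3 i j l \<in> (tkk_ideal :: ('b,'k::field_char_0) spoly set)"
proof -
  have eq: "(6 * (Var (F, i) * Var (E, j) * Var (F, l)) - Const (Kbr F E F) * A3 i j l :: ('b,'k) spoly) = (6 * ve j) * M5 i l"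
    by (simp add: A3_def M1_def M2_def M3_def M4_def M5_def Const_uminus Kbr_def sum_sl2b algebra_simps)
  show ?thesis unfolding eq by (intro I_add I_mult I_M)
qed

lemma cert3_FEH: "6 * (Var (F, i) * Var (E, j) * Var (H, l)) - Const (Kbr F E H) * A3 i j l \<in> (tkk_ideal :: ('b,'k::field_char_0) spoly set)"
proof -
  have eq: "(6 * (Var (F, i) * Var (E, j) * Var (H, l)) - Const (Kbr F E H) * A3 i j l :: ('b,'k) spoly) = (1 * ve l) * M4 i j + ((-4) * vf l) * M2 i j + (5 * ve j) * M4 i l + ((-2) * vf j) * M2 i l + (3 * ve i) * M4 j l"
    by (simp add: A3_def M1_def M2_def M3_def M4_def M5_def Const_uminus Kbr_def sum_sl2b algebra_simps)
  show ?thesis unfolding eq by (intro I_add I_mult I_M)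
qed

lemma cert3_FFE: "6 * (Var (F, i) * Var (F, j) * Var (E, l)) - Const (Kbr F F E) * A3 i j l \<in> (tkk_ideal :: ('b,'k::field_char_0) spoly set)"
proof -
  have eq: "(6 * (Var (F, i) * Var (F, j) * Var (E, l)) - Const (Kbr F F E) * A3 i j l :: ('b,'k) spoly) = (6 * ve l) * M5 i j"
    by (simp add: A3_def M1_def M2_def M3_def M4_def M5_def Const_uminus Kbr_def sum_sl2b algebra_simps)
  show ?thesis unfolding eq by (intro I_add I_mult I_M)
qed

lemma cert3_FFF: "6 * (Var (F, i) * Var (F, j) * Var (F, l)) - Const (Kbr F F F) * A3 i j l \<in> (tkk_ideal :: ('b,'k::field_char_0) spoly set)"
proof -
  have eq: "(6 * (Var (F, i) * Var (F, j) * Var (F, l)) - Const (Kbr F F F) * A3 i j l :: ('b,'k) spoly) = (6 * vf l) * M5 i j"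
    by (simp add: A3_def M1_def M2_def M3_def M4_def M5_def Const_uminus Kbr_def sum_sl2b algebra_simps)
  show ?thesis unfolding eq by (intro I_add I_mult I_M)
qed

lemma cert3_FFH: "6 * (Var (F, i) * Var (F, j) * Var (H, l)) - Const (Kbr F F H) * A3 i j l \<in> (tkk_ideal :: ('b,'k::field_char_0) spoly set)"
proof -
  have eq: "(6 * (Var (F, i) * Var (F, j) * Var (H, l)) - Const (Kbr F F H) * A3 i j l :: ('b,'k) spoly) = (6 * vh l) * M5 i j"
    by (simp add: A3_def M1_def M2_def M3_def M4_def M5_def Const_uminus Kbr_def sum_sl2b algebra_simps)
  show ?thesis unfolding eq by (intro I_add I_mult I_M)
qed

lemma cert3_FHE: "6 * (Var (F, i) * Var (H, j) * Var (E, l)) - Const (Kbr F H E) * A3 i j l \<in> (tkk_ideal :: ('b,'k::field_char_0) spoly set)"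
proof -
  have eq: "(6 * (Var (F, i) * Var (H, j) * Var (E, l)) - Const (Kbr F H E) * A3 i j l :: ('b,'k) spoly) = (5 * ve l) * M4 i j + ((-2) * vf l) * M2 i j + (1 * ve j) * M4 i l + ((-4) * vf j) * M2 i l + (3 * ve i) * M4 j l"
    by (simp add: A3_def M1_def M2_def M3_def M4_def M5_def Const_uminus Kbr_def sum_sl2b algebra_simps)
  show ?thesis unfolding eq by (intro I_add I_mult I_M)
qed

lemma cert3_FHF: "6 * (Var (F, i) * Var (H, j) * Var (F, l)) - Const (Kbr F H F) * A3 i j l \<in> (tkk_ideal :: ('b,'k::field_char_0) spoly set)"
proof -
  have eq: "(6 * (Var (F, i) * Var (H, j) * Var (F, l)) - Const (Kbr F H F) * A3 i j l :: ('b,'k) spoly) = (6 * vf l) * M4 i j + (6 * vh l) * M5 i j + ((-6) * vf j) * M4 i l"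
    by (simp add: A3_def M1_def M2_def M3_def M4_def M5_def Const_uminus Kbr_def sum_sl2b algebra_simps)
  show ?thesis unfolding eq by (intro I_add I_mult I_M)
qed

lemma cert3_FHH: "6 * (Var (F, i) * Var (H, j) * Var (H, l)) - Const (Kbr F H H) * A3 i j l \<in> (tkk_ideal :: ('b,'k::field_char_0) spoly set)"
proof -
  have eq: "(6 * (Var (F, i) * Var (H, j) * Var (H, l)) - Const (Kbr F H H) * A3 i j l :: ('b,'k) spoly) = ((-6) * ve l) * M5 i j + (6 * vh l) * M4 i j + ((-6) * vf j) * M3 i l + ((-6) * ve i) * M5 j l"
    by (simp add: A3_def M1_def M2_def M3_def M4_def M5_def Const_uminus Kbr_def sum_sl2b algebra_simps)
  show ?thesis unfolding eq by (intro I_add I_mult I_M)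
qed

lemma cert3_HEE: "6 * (Var (H, i) * Var (E, j) * Var (E, l)) - Const (Kbr H E E) * A3 i j l \<in> (tkk_ideal :: ('b,'k::field_char_0) spoly set)"
proof -
  have eq: "(6 * (Var (H, i) * Var (E, j) * Var (E, l)) - Const (Kbr H E E) * A3 i j l :: ('b,'k) spoly) = ((-6) * vh l) * M1 i j + (6 * ve j) * M2 i l"
    by (simp add: A3_def M1_def M2_def M3_def M4_def M5_def Const_uminus Kbr_def sum_sl2b algebra_simps)
  show ?thesis unfolding eq by (intro I_add I_mult I_M)
qed

lemma cert3_HEF: "6 * (Var (H, i) * Var (E, j) * Var (F, l)) - Const (Kbr H E F) * A3 i j l \<in> (tkk_ideal :: ('b,'k::field_char_0) spoly set)"
proof -
  have eq: "(6 * (Var (H, i) * Var (E, j) * Var (F, l)) - Const (Kbr H E F) * A3 i j l :: ('b,'k) spoly) = ((-1) * ve l) * M4 i j + (4 * vf l) * M2 i j + (1 * ve j) * M4 i l + (2 * vf j) * M2 i l + ((-3) * ve i) * M4 j l"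
    by (simp add: A3_def M1_def M2_def M3_def M4_def M5_def Const_uminus Kbr_def sum_sl2b algebra_simps)
  show ?thesis unfolding eq by (intro I_add I_mult I_M)
qed

lemma cert3_HEH: "6 * (Var (H, i) * Var (E, j) * Var (H, l)) - Const (Kbr H E H) * A3 i j l \<in> (tkk_ideal :: ('b,'k::field_char_0) spoly set)"
proof -
  have eq: "(6 * (Var (H, i) * Var (E, j) * Var (H, l)) - Const (Kbr H E H) * A3 i j l :: ('b,'k) spoly) = ((-6) * vf l) * M1 i j + (6 * vh l) * M2 i j + ((-6) * vf j) * M1 i l + ((-6) * ve i) * M3 j l"
    by (simp add: A3_def M1_def M2_def M3_def M4_def M5_def Const_uminus Kbr_def sum_sl2b algebra_simps)
  show ?thesis unfolding eq by (intro I_add I_mult I_M)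
qed

lemma cert3_HFE: "6 * (Var (H, i) * Var (F, j) * Var (E, l)) - Const (Kbr H F E) * A3 i j l \<in> (tkk_ideal :: ('b,'k::field_char_0) spoly set)"
proof -
  have eq: "(6 * (Var (H, i) * Var (F, j) * Var (E, l)) - Const (Kbr H F E) * A3 i j l :: ('b,'k) spoly) = (1 * ve l) * M4 i j + (2 * vf l) * M2 i j + ((-1) * ve j) * M4 i l + (4 * vf j) * M2 i l + ((-3) * ve i) * M4 j l"
    by (simp add: A3_def M1_def M2_def M3_def M4_def M5_def Const_uminus Kbr_def sum_sl2b algebra_simps)
  show ?thesis unfolding eq by (intro I_add I_mult I_M)
qed

lemma cert3_HFF: "6 * (Var (H, i) * Var (F, j) * Var (F, l)) - Const (Kbr H F F) * A3 i j l \<in> (tkk_ideal :: ('b,'k::field_char_0) spoly set)"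
proof -
  have eq: "(6 * (Var (H, i) * Var (F, j) * Var (F, l)) - Const (Kbr H F F) * A3 i j l :: ('b,'k) spoly) = ((-6) * vh l) * M5 i j + (6 * vf j) * M4 i l"
    by (simp add: A3_def M1_def M2_def M3_def M4_def M5_def Const_uminus Kbr_def sum_sl2b algebra_simps)
  show ?thesis unfolding eq by (intro I_add I_mult I_M)
qed

lemma cert3_HFH: "6 * (Var (H, i) * Var (F, j) * Var (H, l)) - Const (Kbr H F H) * A3 i j l \<in> (tkk_ideal :: ('b,'k::field_char_0) spoly set)"
proof -
  have eq: "(6 * (Var (H, i) * Var (F, j) * Var (H, l)) - Const (Kbr H F H) * A3 i j l :: ('b,'k) spoly) = (6 * ve l) * M5 i j + (6 * vf j) * M3 i l + (6 * ve i) * M5 j l"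
    by (simp add: A3_def M1_def M2_def M3_def M4_def M5_def Const_uminus Kbr_def sum_sl2b algebra_simps)
  show ?thesis unfolding eq by (intro I_add I_mult I_M)
qed

lemma cert3_HHE: "6 * (Var (H, i) * Var (H, j) * Var (E, l)) - Const (Kbr H H E) * A3 i j l \<in> (tkk_ideal :: ('b,'k::field_char_0) spoly set)"
proof -
  have eq: "(6 * (Var (H, i) * Var (H, j) * Var (E, l)) - Const (Kbr H H E) * A3 i j l :: ('b,'k) spoly) = (6 * ve l) * M3 i j + ((-12) * vf l) * M1 i j + (6 * vh l) * M2 i j + ((-6) * ve j) * M3 i l + ((-6) * ve i) * M3 j l"
    by (simp add: A3_def M1_def M2_def M3_def M4_def M5_def Const_uminus Kbr_def sum_sl2b algebra_simps)
  show ?thesis unfolding eq by (intro I_add I_mult I_M)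
qed

lemma cert3_HHF: "6 * (Var (H, i) * Var (H, j) * Var (F, l)) - Const (Kbr H H F) * A3 i j l \<in> (tkk_ideal :: ('b,'k::field_char_0) spoly set)"
proof -
  have eq: "(6 * (Var (H, i) * Var (H, j) * Var (F, l)) - Const (Kbr H H F) * A3 i j l :: ('b,'k) spoly) = (6 * vf l) * M3 i j + (6 * ve j) * M5 i l + (6 * ve i) * M5 j l"
    by (simp add: A3_def M1_def M2_def M3_def M4_def M5_def Const_uminus Kbr_def sum_sl2b algebra_simps)
  show ?thesis unfolding eq by (intro I_add I_mult I_M)
qed

lemma cert3_HHH: "6 * (Var (H, i) * Var (H, j) * Var (H, l)) - Const (Kbr H H H) * A3 i j l \<in> (tkk_ideal :: ('b,'k::field_char_0) spoly set)"
proof -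
  have eq: "(6 * (Var (H, i) * Var (H, j) * Var (H, l)) - Const (Kbr H H H) * A3 i j l :: ('b,'k) spoly) = ((-6) * vf l) * M2 i j + (6 * vh l) * M3 i j + (6 * ve j) * M4 i l + (6 * ve i) * M4 j l"
    by (simp add: A3_def M1_def M2_def M3_def M4_def M5_def Const_uminus Kbr_def sum_sl2b algebra_simps)
  show ?thesis unfolding eq by (intro I_add I_mult I_M)
qed

lemma cert4_E: "A3 i j l * Var (E, m) \<in> (tkk_ideal :: ('b,'k::field_char_0) spoly set)"
proof -
  have eq: "(A3 i j l * Var (E, m) :: ('b,'k) spoly) = (1 * ve l * ve m) * M4 i j + ((-1) * vf l * ve m) * M2 i j + ((-3) * vf l * vh m) * M1 i j + ((-1) * ve j * ve m) * M4 i l + (1 * vf j * ve m) * M2 i l + (3 * vf j * vh m) * M1 i l + (3 * ve j * vf l) * M2 i m + ((-3) * vf j * ve l) * M2 i m"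
    by (simp add: A3_def M1_def M2_def M3_def M4_def M5_def algebra_simps)
  show ?thesis unfolding eq by (intro I_add I_mult I_M)
qed

lemma cert4_F: "A3 i j l * Var (F, m) \<in> (tkk_ideal :: ('b,'k::field_char_0) spoly set)"
proof -
  have eq: "(A3 i j l * Var (F, m) :: ('b,'k) spoly) = (1 * ve l * vf m) * M4 i j + (3 * ve l * vh m) * M5 i j + ((-1) * vf l * vf m) * M2 i j + ((-1) * ve j * vf m) * M4 i l + ((-3) * ve j * vh m) * M5 i l + (1 * vf j * vf m) * M2 i l + (3 * ve j * vf l) * M4 i m + ((-3) * vf j * ve l) * M4 i m"
    by (simp add: A3_def M1_def M2_def M3_def M4_def M5_def algebra_simps)
  show ?thesis unfolding eq by (intro I_add I_mult I_M)
qed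

lemma cert4_H: "A3 i j l * Var (H, m) \<in> (tkk_ideal :: ('b,'k::field_char_0) spoly set)"
proof -
  have eq: "(A3 i j l * Var (H, m) :: ('b,'k) spoly) = ((-3) * ve l * ve m) * M5 i j + (1 * ve l * vh m) * M4 i j + (3 * vf l * vf m) * M1 i j + ((-1) * vf l * vh m) * M2 i j + (3 * ve j * ve m) * M5 i l + ((-1) * ve j * vh m) * M4 i l + ((-3) * vf j * vf m) * M1 i l + (1 * vf j * vh m) * M2 i l + (3 * ve j * vf l) * M3 i m + ((-3) * vf j * ve l) * M3 i m"
    by (simp add: A3_def M1_def M2_def M3_def M4_def M5_def algebra_simps)
  show ?thesis unfolding eq by (intro I_add I_mult I_M)
qed

definition R2 :: "sl2b \<Rightarrow> sl2b \<Rightarrow> 'b \<Rightarrow> 'b \<Rightarrow> ('b,'k::field_char_0) spoly" where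
 "R2 X Y i j = Const (2 * Kf X Y) * (vh i * vh j + vh j * vh i)
 + Const (2 * brk X Y H) * (ve i * vf j - ve j * vf i)
 + Const (brk X Y E) * (vh i * ve j - vh j * ve i)
 - Const (brk X Y F) * (vh i * vf j - vh j * vf i)"

lemma cert2: "4 * (Var (X, i) * Var (Y, j)) - R2 X Y i j \<in> (tkk_ideal :: ('b,'k::field_char_0) spoly set)"
proof (cases X; cases Y)
  assume "X = E" "Y = E"
  then have "(4 * (Var (X, i) * Var (Y, j)) - R2 X Y i j :: ('b,'k) spoly) = 4 * M1 i j"
    by (simp add: R2_def M1_def algebra_simps)
  then show ?thesis using I_mult[OF I_M(1)] by metis
next
  assume "X = E" "Y = F"
  then have "(4 * (Var (X, i) * Var (Y, j)) - R2 X Y i j :: ('b,'k) spoly) = (-2) * M3 i j"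
    by (simp add: R2_def M3_def algebra_simps)
  then show ?thesis using I_mult[OF I_M(3)] by metis
next
  assume "X = E" "Y = H"
  then have "(4 * (Var (X, i) * Var (Y, j)) - R2 X Y i j :: ('b,'k) spoly) = 2 * M2 i j"
    by (simp add: R2_def M2_def Const_uminus algebra_simps)
  then show ?thesis using I_mult[OF I_M(2)] by metis
next
  assume "X = F" "Y = E"
  then have "(4 * (Var (X, i) * Var (Y, j)) - R2 X Y i j :: ('b,'k) spoly) = (-2) * M3 i j"
    by (simp add: R2_def M3_def Const_uminus algebra_simps)
  then show ?thesis using I_mult[OF I_M(3)] by metis
next
  assume "X = F" "Y = F"
  then have "(4 * (Var (X, i) * Var (Y, j)) - R2 X Y i j :: ('b,'k) spoly) = 4 * M5 i j"
    by (simp add: R2_def M5_def algebra_simps)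
  then show ?thesis using I_mult[OF I_M(5)] by metis
next
  assume "X = F" "Y = H"
  then have "(4 * (Var (X, i) * Var (Y, j)) - R2 X Y i j :: ('b,'k) spoly) = 2 * M4 i j"
    by (simp add: R2_def M4_def Const_uminus algebra_simps)
  then show ?thesis using I_mult[OF I_M(4)] by metis
next
  assume "X = H" "Y = E"
  then have "(4 * (Var (X, i) * Var (Y, j)) - R2 X Y i j :: ('b,'k) spoly) = 2 * M2 i j"
    by (simp add: R2_def M2_def Const_uminus algebra_simps)
  then show ?thesis using I_mult[OF I_M(2)] by metis
next
  assume "X = H" "Y = F"
  then have "(4 * (Var (X, i) * Var (Y, j)) - R2 X Y i j :: ('b,'k) spoly) = 2 * M4 i j"
    by (simp add: R2_def M4_def Const_uminus algebra_simps)
  then show ?thesis using I_mult[OF I_M(4)] by metis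
next
  assume "X = H" "Y = H"
  then have "(4 * (Var (X, i) * Var (Y, j)) - R2 X Y i j :: ('b,'k) spoly) = 0"
    by (simp add: R2_def algebra_simps)
  then show ?thesis by (simp add: I_zero)
qed

lemma sec_phi2': "sec (phi_list [(X, i), (Y, j)] :: ('b::finite,'k::field_char_0) wvec) = Const (1/4) * R2 X Y i j"
proof -
  have e1: "Const (Kf X Y / 2) = (Const (1/4) * Const (2 * Kf X Y) :: ('b,'k) spoly)"
    by (simp add: Const_mult[symmetric])
  have e2: "Const (1/2) * (Const b * x) = Const (1/4) * (Const (2 * b) * x)" for b and x :: "('b,'k) spoly"
    by (simp add: Const_mult[symmetric] mult.assoc[symmetric])
  show ?thesis
    unfolding sec_phi2 R2_def e1 e2 by (simp only: distrib_left right_diff_distrib mult.assoc)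
qed

lemma c4: "Const (1/4) * (4 * x) = (x :: ('b,'k::field_char_0) spoly)"
proof -
  have "Const (1/4) * (4 * x) = Const (1/4) * Const 4 * x" by (simp add: mult.assoc)
  also have "Const (1/4) * Const 4 = (Const (1/4 * 4) :: ('b,'k) spoly)" by (rule Const_mult[symmetric])
  also have "(1/4 * 4 :: 'k) = 1" by simp
  finally show ?thesis by simp
qed
lemma c6: "Const (1/6) * (6 * x) = (x :: ('b,'k::field_char_0) spoly)"
proof -
  have "Const (1/6) * (6 * x) = Const (1/6) * Const 6 * x" by (simp add: mult.assoc)
  also have "Const (1/6) * Const 6 = (Const (1/6 * 6) :: ('b,'k) spoly)" by (rule Const_mult[symmetric])
  also have "(1/6 * 6 :: 'k) = 1" by simp
  finally show ?thesis by simp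
qed

lemma deg2: "Var a * Var b - sec (phi_list [a, b]) \<in> (tkk_ideal :: ('b::finite,'k::field_char_0) spoly set)"
proof -
  obtain X i Y j where ab: "a = (X, i)" "b = (Y, j)" by fastforce
  have "Var a * Var b - sec (phi_list [a, b]) = Const (1/4) * (4 * (Var (X, i) * Var (Y, j)) - R2 X Y i j :: ('b,'k) spoly)"
    unfolding ab sec_phi2' by (simp only: right_diff_distrib c4)
  then show ?thesis using I_mult[OF cert2] by metis
qed

lemma cert3: "6 * (Var (X, i) * Var (Y, j) * Var (Z, l)) - Const (Kbr X Y Z) * A3 i j l \<in> (tkk_ideal :: ('b,'k::field_char_0) spoly set)"
  by (cases X; cases Y; cases Z) (simp_all only: cert3_EEE cert3_EEF cert3_EEH cert3_EFE cert3_EFF cert3_EFH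
    cert3_EHE cert3_EHF cert3_EHH cert3_FEE cert3_FEF cert3_FEH cert3_FFE cert3_FFF cert3_FFH
    cert3_FHE cert3_FHF cert3_FHH cert3_HEE cert3_HEF cert3_HEH cert3_HFE cert3_HFF cert3_HFH
    cert3_HHE cert3_HHF cert3_HHH)

lemma cert4: "A3 i j l * Var (W, m) \<in> (tkk_ideal :: ('b,'k::field_char_0) spoly set)"
  by (cases W) (simp_all only: cert4_E cert4_F cert4_H)

lemma deg3: "Var a * Var b * Var c - sec (phi_list [a, b, c]) \<in> (tkk_ideal :: ('b::finite,'k::field_char_0) spoly set)"
proof -
  obtain X i Y j Z l where abc: "a = (X, i)" "b = (Y, j)" "c = (Z, l)" by (metis surj_pair)
  have "Var a * Var b * Var c - sec (phi_list [a, b, c]) =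
     Const (1/6) * (6 * (Var (X, i) * Var (Y, j) * Var (Z, l)) - Const (Kbr X Y Z) * A3 i j l :: ('b,'k) spoly)"
    unfolding abc sec_phi3 by (simp only: right_diff_distrib c6)
  then show ?thesis using I_mult[OF cert3] by metis
qed

lemma deg4: "Var a * Var b * Var c * Var d \<in> (tkk_ideal :: ('b::finite,'k::field_char_0) spoly set)"
proof -
  obtain X i Y j Z l where abc: "a = (X, i)" "b = (Y, j)" "c = (Z, l)" by (metis surj_pair)
  obtain W m where d: "d = (W, m)" by fastforce
  have "(Var a * Var b * Var c * Var d :: ('b,'k) spoly) =
     Var d * (Var a * Var b * Var c - sec (phi_list [a, b, c])) + Const (1/6) * Const (Kbr X Y Z) * (A3 i j l * Var (W, m))"
    unfolding sec_phi3 abc d by (simp add: algebra_simps)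
  moreover have "Var d * (Var a * Var b * Var c - sec (phi_list [a, b, c])) \<in> (tkk_ideal :: ('b,'k) spoly set)"
    by (rule I_mult[OF deg3])
  moreover have "Const (1/6) * Const (Kbr X Y Z) * (A3 i j l * Var (W, m)) \<in> (tkk_ideal :: ('b,'k) spoly set)"
    by (rule I_mult[OF cert4])
  ultimately show ?thesis by (metis I_add)
qed

lemma cong_Mon: "Mon m - sec (phi (Mon m)) \<in> (tkk_ideal :: ('b::finite,'k::field_char_0) spoly set)"
proof -
  have M: "Mon m = (prod_list (map Var (vars_list m)) :: ('b,'k) spoly)" by (rule Mon_vars)
  have P: "phi (Mon m :: ('b,'k) spoly) = phi_list (vars_list m)" by (rule phi_Mon)
  show ?thesis
  proof (cases "vars_list m" rule: phi_list.cases)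
    case 1 then show ?thesis using M P by (simp del: phi_list.simps add: sec_phi0 I_zero)
  next
    case (2 u b) then show ?thesis using M P by (simp del: phi_list.simps add: sec_phi1 I_zero)
  next
    case (3 u1 b1 u2 b2) then show ?thesis using M P deg2[of "(u1,b1)" "(u2,b2)", where 'k='k] by (simp del: phi_list.simps)
  next
    case (4 u1 b1 u2 b2 u3 b3) then show ?thesis using M P deg3[of "(u1,b1)" "(u2,b2)" "(u3,b3)", where 'k='k]
      by (simp del: phi_list.simps add: mult.assoc)
  next
    case (5 a b c d rest)
    have "Mon m = (Var a * Var b * Var c * Var d) * prod_list (map Var rest :: ('b,'k) spoly list)"
      using M 5 by (simp add: mult.assoc)
    then have "Mon m \<in> (tkk_ideal :: ('b,'k) spoly set)" using I_mult[OF deg4] by (metis mult.commute)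
    moreover have "sec (phi (Mon m :: ('b,'k) spoly)) = 0" using P 5 by (simp add: sec_zero)
    ultimately show ?thesis by simp
  qed
qed

lemma cong_all: "p - sec (phi p) \<in> (tkk_ideal :: ('b::finite,'k::field_char_0) spoly set)"
proof (induct p rule: spoly_induct)
  case zero then show ?case by (simp add: sec_zero I_zero)
next
  case (single m c)
  have "Poly_Mapping.single m c - sec (phi (Poly_Mapping.single m c)) = Const c * (Mon m - sec (phi (Mon m)) :: ('b,'k) spoly)"
    by (simp add: single_as_Mon phi_Const_mult sec_scale right_diff_distrib)
  then show ?case using I_mult[OF cong_Mon] by metis
next
  case (add p q)
  have "p + q - sec (phi (p + q)) = (p - sec (phi p)) + (q - sec (phi q))"
    by (simp add: phi_add sec_add)
  then show ?case using add I_add by metis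
qed

theorem proposition3p2:
  shows "range (phi :: ('b::finite, 'k::field_char_0) spoly \<Rightarrow> _) = Wspace
       \<and> (\<forall>p :: ('b, 'k) spoly. phi p = (\<lambda>_. 0) \<longleftrightarrow> p \<in> tkk_ideal)"
proof (intro conjI allI iffI)
  show "range (phi :: ('b, 'k) spoly \<Rightarrow> _) = Wspace" by (rule range_phi)
next
  fix p :: "('b, 'k) spoly"
  assume "phi p = (\<lambda>_. 0)"
  then have "sec (phi p) = 0" by (simp add: sec_zero)
  then show "p \<in> tkk_ideal" using cong_all[of p] by simp
next
  fix p :: "('b, 'k) spoly"
  assume "p \<in> tkk_ideal"
  then show "phi p = (\<lambda>_. 0)" by (rule ideal_ker)
qed

end
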